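(* Under the CRFE, the linear projection of $\hat{\boldsymbol{\tau}}-\boldsymbol{\tau}$ on $\hat{\boldsymbol{\tau}}_x$ is $\boldsymbol{V}_{\tau x}\boldsymbol{V}_{xx}^{-1}\hat{\boldsymbol{\tau}}_x$, the residual is $\hat{\boldsymbol{\tau}}-\boldsymbol{\tau}-\boldsymbol{V}_{\tau x}\boldsymbol{V}_{xx}^{-1}\hat{\boldsymbol{\tau}}_x$, and $\mathrm{Cov}(\boldsymbol{V}_{\tau x}\boldsymbol{V}_{xx}^{-1}\hat{\boldsymbol{\tau}}_x)=\boldsymbol{V}^{\parallel}_{\tau\tau}$, $\mathrm{Cov}(\hat{\boldsymbol{\tau}}-\boldsymbol{\tau}-\boldsymbol{V}_{\tau x}\boldsymbol{V}_{xx}^{-1}\hat{\boldsymbol{\tau}}_x)=\boldsymbol{V}^{\perp}_{\tau\tau}$, and $\mathrm{Cov}(\boldsymbol{V}_{\tau x}\boldsymbol{V}_{xx}^{-1}\hat{\boldsymbol{\tau}}_x,\ \hat{\boldsymbol{\tau}}-\boldsymbol{\tau}-\boldsymbol{V}_{\tau x}\boldsymbol{V}_{xx}^{-1}\hat{\boldsymbol{\tau}}_x)=\boldsymbol{0}$.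
   Context: Setup ($2^K$ factorial experiment, finite population). There are $K\ge 1$ factors with levels $\pm1$ and $Q=2^K$ treatment combinations $q=1,\dots,Q$; combination $q$ sets factor $k$ at level $\iota_k(q)\in\{-1,+1\}$, bijectively onto $\{-1,+1\}^K$. There are $F=Q-1$ factorial effects, one for each nonempty $A\subseteq\{1,\dots,K\}$, enumerated $f=1,\dots,F$, with $g_{fq}=\prod_{k\in A}\iota_k(q)$; $\boldsymbol{b}_q=(g_{1q},\dots,g_{Fq})'$. Units $i=1,\dots,n$ have fixed potential outcomes $Y_i(q)$ and covariates $\boldsymbol{x}_i\in\mathbb{R}^L$; $\bar Y(q)$, $\bar{\boldsymbol{x}}$ are means, $\boldsymbol{\tau}_i=2^{-(K-1)}\sum_q\boldsymbol{b}_qY_i(q)$, $\boldsymbol{\tau}=2^{-(K-1)}\sum_q\boldsymbol{b}_q\bar Y(q)$. Finite-population (co)variances have divisor $n-1$: $S_{qq}$ of $Y(q)$, $\boldsymbol{S}_{xx}$ of $\boldsymbol{x}$ (nonsingular), $\boldsymbol{S}_{q,x}=\boldsymbol{S}_{x,q}'$ between $Y(q)$ and $\boldsymbol{x}$. CRFE: with fixed $n_q\ge1$, $\sum n_q=n$, $\boldsymbol{Z}$ is uniform over assignments with $n_q$ units in combination $q$; $\hat{\bar Y}(q)$ and $\hat{\bar{\boldsymbol{x}}}(q)$ are the observed-outcome and covariate means in group $q$; $\hat{\boldsymbol{\tau}}=2^{-(K-1)}\sum_q\boldsymbol{b}_q\hat{\bar Y}(q)$, $\hat{\boldsymbol{\tau}}_x=(\hat{\boldsymbol{\tau}}_{x,1}',\dots,\hat{\boldsymbol{\tau}}_{x,F}')'$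 with $\hat{\boldsymbol{\tau}}_{x,f}=2^{-(K-1)}\sum_qg_{fq}\hat{\bar{\boldsymbol{x}}}(q)$. $\boldsymbol{V}_{\tau x}=\boldsymbol{V}_{x\tau}'=2^{-2(K-1)}\sum_qn_q^{-1}(\boldsymbol{b}_q\boldsymbol{b}_q')\otimes\boldsymbol{S}_{q,x}$, $\boldsymbol{V}_{xx}=2^{-2(K-1)}\sum_qn_q^{-1}(\boldsymbol{b}_q\boldsymbol{b}_q')\otimes\boldsymbol{S}_{xx}$ (these are the covariance blocks of $(\hat{\boldsymbol{\tau}},\hat{\boldsymbol{\tau}}_x)$ under the CRFE). Linear projections: $Y_i^{\parallel}(q)=\bar Y(q)+\boldsymbol{S}_{q,x}\boldsymbol{S}_{xx}^{-1}(\boldsymbol{x}_i-\bar{\boldsymbol{x}})$, $Y_i^{\perp}(q)=Y_i(q)-Y_i^{\parallel}(q)$, $\boldsymbol{\tau}_i^{\parallel}=2^{-(K-1)}\sum_q\boldsymbol{b}_qY_i^{\parallel}(q)$, $\boldsymbol{\tau}_i^{\perp}=2^{-(K-1)}\sum_q\boldsymbol{b}_qY_i^{\perp}(q)$. Let $S_{qq}^{\parallel},S_{qq}^{\perp}$ be the finite-population variances (divisor $n-1$) of $Y^{\parallel}(q),Y^{\perp}(q)$ and $\boldsymbol{S}_{\tau\tau}^{\parallel},\boldsymbol{S}_{\tau\tau}^{\perp}$ those of $\boldsymbol{\tau}^{\parallel},\boldsymbol{\tau}^{\perp}$. Define $\boldsymbol{V}_{\tau\tau}^{\parallel}=2^{-2(K-1)}\sum_qn_q^{-1}\boldsymbol{b}_q\boldsymbol{b}_q'S^{\parallel}_{qq}-n^{-1}\boldsymbol{S}^{\parallel}_{\tau\tau}$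 and $\boldsymbol{V}_{\tau\tau}^{\perp}=2^{-2(K-1)}\sum_qn_q^{-1}\boldsymbol{b}_q\boldsymbol{b}_q'S^{\perp}_{qq}-n^{-1}\boldsymbol{S}^{\perp}_{\tau\tau}$. *)

theory Defs
  imports "Jordan_Normal_Form.Gauss_Jordan_Elimination" "HOL-Library.FuncSet"
begin

(* Conventions: units are i = 0..n-1, treatment combinations q = 0..Q-1 (Q = 2^K),
   factors k = 1..K, factorial effects f = 0..F-1 (F = Q - 1), covariates l = 0..L-1.
   Potential outcomes: Y i q; covariates: x i l.  *)

definition mat_inv :: "real mat \<Rightarrow> real mat" where
  "mat_inv A = (case mat_inverse A of Some B \<Rightarrow> B | None \<Rightarrow> 0\<^sub>m (dim_row A) (dim_row A))"

definition kron :: "real mat \<Rightarrow> real mat \<Rightarrow> real mat" where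
  "kron A B = mat (dim_row A * dim_row B) (dim_col A * dim_col B)
     (\<lambda>(i,j). A $$ (i div dim_row B, j div dim_col B) * B $$ (i mod dim_row B, j mod dim_col B))"

definition outer :: "real vec \<Rightarrow> real vec \<Rightarrow> real mat" where
  "outer u v = mat (dim_vec u) (dim_vec v) (\<lambda>(i,j). u $ i * v $ j)"

definition fmean :: "nat \<Rightarrow> (nat \<Rightarrow> real) \<Rightarrow> real" where
  "fmean n u = (\<Sum>i<n. u i) / real n"

definition fcov :: "nat \<Rightarrow> (nat \<Rightarrow> real) \<Rightarrow> (nat \<Rightarrow> real) \<Rightarrow> real" where
  "fcov n u v = (\<Sum>i<n. (u i - fmean n u) * (v i - fmean n v)) / (real n - 1)"

definition gcoef :: "(nat \<Rightarrow> nat set) \<Rightarrow> (nat \<Rightarrow> nat \<Rightarrow> int) \<Rightarrow> nat \<Rightarrow> nat \<Rightarrow> real" where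
  "gcoef eff iota f q = (\<Prod>k\<in>eff f. real_of_int (iota q k))"

definition bvec :: "nat \<Rightarrow> (nat \<Rightarrow> nat set) \<Rightarrow> (nat \<Rightarrow> nat \<Rightarrow> int) \<Rightarrow> nat \<Rightarrow> real vec" where
  "bvec K eff iota q = vec (2^K - 1) (\<lambda>f. gcoef eff iota f q)"

definition Sxx :: "nat \<Rightarrow> nat \<Rightarrow> (nat \<Rightarrow> nat \<Rightarrow> real) \<Rightarrow> real mat" where
  "Sxx n L x = mat L L (\<lambda>(l,m). fcov n (\<lambda>i. x i l) (\<lambda>i. x i m))"

definition Sqx :: "nat \<Rightarrow> nat \<Rightarrow> (nat \<Rightarrow> nat \<Rightarrow> real) \<Rightarrow> (nat \<Rightarrow> nat \<Rightarrow> real) \<Rightarrow> nat \<Rightarrow> real mat" where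
  "Sqx n L Y x q = mat 1 L (\<lambda>(_,l). fcov n (\<lambda>i. Y i q) (\<lambda>i. x i l))"

definition c2 :: "nat \<Rightarrow> real" where
  "c2 K = 1 / (2 ^ (K - 1))^2"

definition Vtx :: "nat \<Rightarrow> nat \<Rightarrow> nat \<Rightarrow> (nat \<Rightarrow> nat set) \<Rightarrow> (nat \<Rightarrow> nat \<Rightarrow> int) \<Rightarrow> (nat \<Rightarrow> nat)
     \<Rightarrow> (nat \<Rightarrow> nat \<Rightarrow> real) \<Rightarrow> (nat \<Rightarrow> nat \<Rightarrow> real) \<Rightarrow> real mat" where
  "Vtx K n L eff iota nq Y x = mat (2^K - 1) ((2^K - 1) * L) (\<lambda>(r,s).
     c2 K * (\<Sum>q<2^K. (1 / real (nq q)) *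
        kron (outer (bvec K eff iota q) (bvec K eff iota q)) (Sqx n L Y x q) $$ (r,s)))"

definition Vxx :: "nat \<Rightarrow> nat \<Rightarrow> nat \<Rightarrow> (nat \<Rightarrow> nat set) \<Rightarrow> (nat \<Rightarrow> nat \<Rightarrow> int) \<Rightarrow> (nat \<Rightarrow> nat)
     \<Rightarrow> (nat \<Rightarrow> nat \<Rightarrow> real) \<Rightarrow> real mat" where
  "Vxx K n L eff iota nq x = mat ((2^K - 1) * L) ((2^K - 1) * L) (\<lambda>(r,s).
     c2 K * (\<Sum>q<2^K. (1 / real (nq q)) *
        kron (outer (bvec K eff iota q) (bvec K eff iota q)) (Sxx n L x) $$ (r,s)))"

definition tau_ind :: "nat \<Rightarrow> (nat \<Rightarrow> nat set) \<Rightarrow> (nat \<Rightarrow> nat \<Rightarrow> int) \<Rightarrow> (nat \<Rightarrow> nat \<Rightarrow> real) \<Rightarrow> nat \<Rightarrow> real vec" where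
  "tau_ind K eff iota Y i = vec (2^K - 1) (\<lambda>f. (1 / 2 ^ (K - 1)) * (\<Sum>q<2^K. gcoef eff iota f q * Y i q))"

definition Stt :: "nat \<Rightarrow> nat \<Rightarrow> (nat \<Rightarrow> nat set) \<Rightarrow> (nat \<Rightarrow> nat \<Rightarrow> int) \<Rightarrow> (nat \<Rightarrow> nat \<Rightarrow> real) \<Rightarrow> real mat" where
  "Stt K n eff iota Y = mat (2^K - 1) (2^K - 1) (\<lambda>(f,f').
     fcov n (\<lambda>i. tau_ind K eff iota Y i $ f) (\<lambda>i. tau_ind K eff iota Y i $ f'))"

definition Vtt :: "nat \<Rightarrow> nat \<Rightarrow> (nat \<Rightarrow> nat set) \<Rightarrow> (nat \<Rightarrow> nat \<Rightarrow> int) \<Rightarrow> (nat \<Rightarrow> nat)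
     \<Rightarrow> (nat \<Rightarrow> nat \<Rightarrow> real) \<Rightarrow> real mat" where
  "Vtt K n eff iota nq Y = mat (2^K - 1) (2^K - 1) (\<lambda>(f,f').
     c2 K * (\<Sum>q<2^K. (1 / real (nq q)) * outer (bvec K eff iota q) (bvec K eff iota q) $$ (f,f')
                 * fcov n (\<lambda>i. Y i q) (\<lambda>i. Y i q))
     - (1 / real n) * Stt K n eff iota Y $$ (f,f'))"

definition Ypar :: "nat \<Rightarrow> nat \<Rightarrow> (nat \<Rightarrow> nat \<Rightarrow> real) \<Rightarrow> (nat \<Rightarrow> nat \<Rightarrow> real) \<Rightarrow> nat \<Rightarrow> nat \<Rightarrow> real" where
  "Ypar n L Y x i q = fmean n (\<lambda>j. Y j q)
     + (Sqx n L Y x q *\<^sub>v (mat_inv (Sxx n L x) *\<^sub>v vec L (\<lambda>l. x i l - fmean n (\<lambda>j. x j l)))) $ 0"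

definition Yperp :: "nat \<Rightarrow> nat \<Rightarrow> (nat \<Rightarrow> nat \<Rightarrow> real) \<Rightarrow> (nat \<Rightarrow> nat \<Rightarrow> real) \<Rightarrow> nat \<Rightarrow> nat \<Rightarrow> real" where
  "Yperp n L Y x i q = Y i q - Ypar n L Y x i q"

(* CRFE: uniformly random assignment z : units -> combinations with n_q units in combination q *)
definition assignments :: "nat \<Rightarrow> nat \<Rightarrow> (nat \<Rightarrow> nat) \<Rightarrow> (nat \<Rightarrow> nat) set" where
  "assignments n Q nq = {z \<in> {..<n} \<rightarrow>\<^sub>E {..<Q}. \<forall>q<Q. card {i. i < n \<and> z i = q} = nq q}"

definition Ex :: "(nat \<Rightarrow> nat) set \<Rightarrow> ((nat \<Rightarrow> nat) \<Rightarrow> real) \<Rightarrow> real" where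
  "Ex Om X = (\<Sum>z\<in>Om. X z) / real (card Om)"

definition Exv :: "nat \<Rightarrow> (nat \<Rightarrow> nat) set \<Rightarrow> ((nat \<Rightarrow> nat) \<Rightarrow> real vec) \<Rightarrow> real vec" where
  "Exv d Om X = vec d (\<lambda>j. Ex Om (\<lambda>z. X z $ j))"

definition Covm :: "nat \<Rightarrow> nat \<Rightarrow> (nat \<Rightarrow> nat) set \<Rightarrow> ((nat \<Rightarrow> nat) \<Rightarrow> real vec) \<Rightarrow> ((nat \<Rightarrow> nat) \<Rightarrow> real vec) \<Rightarrow> real mat" where
  "Covm d1 d2 Om X W = mat d1 d2 (\<lambda>(j,k).
     Ex Om (\<lambda>z. (X z $ j - Ex Om (\<lambda>w. X w $ j)) * (W z $ k - Ex Om (\<lambda>w. W w $ k))))"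

definition lin_proj :: "nat \<Rightarrow> nat \<Rightarrow> (nat \<Rightarrow> nat) set \<Rightarrow> ((nat \<Rightarrow> nat) \<Rightarrow> real vec) \<Rightarrow> ((nat \<Rightarrow> nat) \<Rightarrow> real vec)
     \<Rightarrow> (nat \<Rightarrow> nat) \<Rightarrow> real vec" where
  "lin_proj d1 d2 Om X W z = Exv d1 Om X
     + (Covm d1 d2 Om X W * mat_inv (Covm d2 d2 Om W W)) *\<^sub>v (W z - Exv d2 Om W)"

definition Yhat :: "nat \<Rightarrow> (nat \<Rightarrow> nat) \<Rightarrow> (nat \<Rightarrow> nat \<Rightarrow> real) \<Rightarrow> (nat \<Rightarrow> nat) \<Rightarrow> nat \<Rightarrow> real" where
  "Yhat n nq Y z q = (\<Sum>i\<in>{i. i < n \<and> z i = q}. Y i q) / real (nq q)"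

definition xhat :: "nat \<Rightarrow> (nat \<Rightarrow> nat) \<Rightarrow> (nat \<Rightarrow> nat \<Rightarrow> real) \<Rightarrow> (nat \<Rightarrow> nat) \<Rightarrow> nat \<Rightarrow> nat \<Rightarrow> real" where
  "xhat n nq x z q l = (\<Sum>i\<in>{i. i < n \<and> z i = q}. x i l) / real (nq q)"

definition tauhat :: "nat \<Rightarrow> nat \<Rightarrow> (nat \<Rightarrow> nat set) \<Rightarrow> (nat \<Rightarrow> nat \<Rightarrow> int) \<Rightarrow> (nat \<Rightarrow> nat)
     \<Rightarrow> (nat \<Rightarrow> nat \<Rightarrow> real) \<Rightarrow> (nat \<Rightarrow> nat) \<Rightarrow> real vec" where
  "tauhat K n eff iota nq Y z = vec (2^K - 1) (\<lambda>f.
     (1 / 2 ^ (K - 1)) * (\<Sum>q<2^K. gcoef eff iota f q * Yhat n nq Y z q))"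

definition tau :: "nat \<Rightarrow> nat \<Rightarrow> (nat \<Rightarrow> nat set) \<Rightarrow> (nat \<Rightarrow> nat \<Rightarrow> int) \<Rightarrow> (nat \<Rightarrow> nat \<Rightarrow> real) \<Rightarrow> real vec" where
  "tau K n eff iota Y = vec (2^K - 1) (\<lambda>f.
     (1 / 2 ^ (K - 1)) * (\<Sum>q<2^K. gcoef eff iota f q * fmean n (\<lambda>i. Y i q)))"

(* stacked (tauhat_{x,1}', ..., tauhat_{x,F}')': entry f*L + l *)
definition tauhat_x :: "nat \<Rightarrow> nat \<Rightarrow> nat \<Rightarrow> (nat \<Rightarrow> nat set) \<Rightarrow> (nat \<Rightarrow> nat \<Rightarrow> int) \<Rightarrow> (nat \<Rightarrow> nat)
     \<Rightarrow> (nat \<Rightarrow> nat \<Rightarrow> real) \<Rightarrow> (nat \<Rightarrow> nat) \<Rightarrow> real vec" where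
  "tauhat_x K n L eff iota nq x z = vec ((2^K - 1) * L) (\<lambda>r.
     (1 / 2 ^ (K - 1)) * (\<Sum>q<2^K. gcoef eff iota (r div L) q * xhat n nq x z q (r mod L)))"

end

theory Submission
  imports Defs "Jordan_Normal_Form.Determinant"
begin


locale crfe =
  fixes K n :: nat and iota :: "nat \<Rightarrow> nat \<Rightarrow> int" and eff :: "nat \<Rightarrow> nat set" and nq :: "nat \<Rightarrow> nat"
  assumes K: "K \<ge> 1"
    and iota: "bij_betw (\<lambda>q. \<lambda>k\<in>{1..K}. iota q k) {..<2^K} ({1..K} \<rightarrow>\<^sub>E {-1, 1})"
    and eff: "bij_betw eff {..<2^K - 1} {A. A \<subseteq> {1..K} \<and> A \<noteq> {}}"
    and nq_pos: "\<And>q. q < 2^K \<Longrightarrow> nq q \<ge> 1"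
    and nq_sum: "(\<Sum>q<2^K. nq q) = n"
begin

abbreviation "g \<equiv> gcoef eff iota"

lemma iota_val: "q < 2^K \<Longrightarrow> k \<in> {1..K} \<Longrightarrow> iota q k = -1 \<or> iota q k = 1"
  using bij_betwE[OF iota] by (fastforce simp: PiE_iff)

lemma iota_inj: "q < 2^K \<Longrightarrow> p < 2^K \<Longrightarrow> q \<noteq> p \<Longrightarrow> \<exists>k\<in>{1..K}. iota q k \<noteq> iota p k"
proof (rule ccontr)
  assume a: "q < 2^K" "p < 2^K" "q \<noteq> p" "\<not> (\<exists>k\<in>{1..K}. iota q k \<noteq> iota p k)"
  hence "(\<lambda>k\<in>{1..K}. iota q k) = (\<lambda>k\<in>{1..K}. iota p k)" by (auto intro!: ext)
  with bij_betw_imp_inj_on[OF iota] a show False by (auto dest: inj_onD)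
qed

lemma eff_sub: "f < 2^K - 1 \<Longrightarrow> eff f \<subseteq> {1..K}" and eff_ne: "f < 2^K - 1 \<Longrightarrow> eff f \<noteq> {}"
  using bij_betwE[OF eff] by auto

lemma hadamard_gen:
  assumes A: "A \<subseteq> {1..K}" and A': "A' \<subseteq> {1..K}"
  shows "(\<Sum>q<2^K. (\<Prod>k\<in>A. real_of_int (iota q k)) * (\<Prod>k\<in>A'. real_of_int (iota q k)))
     = (if A = A' then 2^K else 0)"
proof -
  define phi where "phi k x = (if k \<in> A then x else 1) * (if k \<in> A' then x else (1::real))" for k x
  have fin: "finite {1..K}" by simp
  have eq1: "(\<Prod>k\<in>A. real_of_int (s k)) * (\<Prod>k\<in>A'. real_of_int (s k))
      = (\<Prod>k\<in>{1..K}. phi k (real_of_int (s k)))" for s :: "nat \<Rightarrow> int"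
  proof -
    have "(\<Prod>k\<in>{1..K}. phi k (real_of_int (s k))) =
      (\<Prod>k\<in>{1..K}. (if k \<in> A then real_of_int (s k) else 1)) * (\<Prod>k\<in>{1..K}. (if k \<in> A' then real_of_int (s k) else 1))"
      unfolding phi_def by (simp add: prod.distrib)
    also have "\<dots> = (\<Prod>k\<in>A. real_of_int (s k)) * (\<Prod>k\<in>A'. real_of_int (s k))"
    proof -
      have "\<And>B. B \<subseteq> {1..K} \<Longrightarrow> (\<Prod>k\<in>{1..K}. (if k \<in> B then real_of_int (s k) else 1)) = (\<Prod>k\<in>B. real_of_int (s k))"
        using prod.inter_restrict[OF fin] by (metis inf.absorb_iff2)
      thus ?thesis using A A' by simp
    qed
    finally show ?thesis by simp
  qed
  have "(\<Sum>q<2^K. (\<Prod>k\<in>A. real_of_int (iota q k)) * (\<Prod>k\<in>A'. real_of_int (iota q k)))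
     = (\<Sum>q<2^K. (\<lambda>s. \<Prod>k\<in>{1..K}. phi k (real_of_int (s k))) (\<lambda>k\<in>{1..K}. iota q k))"
    using A A' unfolding eq1[symmetric] by (intro sum.cong refl) (auto intro!: prod.cong arg_cong2[where f="(*)"])
  also have "\<dots> = (\<Sum>s\<in>{1..K} \<rightarrow>\<^sub>E {-1, 1}. \<Prod>k\<in>{1..K}. phi k (real_of_int (s k)))"
    by (rule sum.reindex_bij_betw[OF iota])
  also have "\<dots> = (\<Prod>k\<in>{1..K}. \<Sum>y\<in>{-1,1::int}. phi k (real_of_int y))"
    by (rule prod_sum_PiE[symmetric]) auto
  also have "\<dots> = (\<Prod>k\<in>{1..K}. (if (k \<in> A) = (k \<in> A') then 2 else 0))"
    by (intro prod.cong refl) (auto simp: phi_def)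
  also have "\<dots> = (if A = A' then 2^K else 0)"
  proof (cases "A = A'")
    case True thus ?thesis by simp
  next
    case False
    then obtain k where "k \<in> {1..K}" "(k \<in> A) \<noteq> (k \<in> A')" using A A' by blast
    thus ?thesis using False by (intro trans[OF prod_zero]) auto
  qed
  finally show ?thesis .
qed

lemma H3: "f < 2^K - 1 \<Longrightarrow> f' < 2^K - 1 \<Longrightarrow> (\<Sum>q<2^K. g f q * g f' q) = (if f = f' then 2^K else 0)"
  unfolding gcoef_def using hadamard_gen[OF eff_sub eff_sub, of f f'] bij_betw_imp_inj_on[OF eff]
  by (auto simp: inj_on_def)

lemma H2: "f < 2^K - 1 \<Longrightarrow> (\<Sum>q<2^K. g f q) = 0"
  unfolding gcoef_def using hadamard_gen[OF eff_sub, of f "{}"] eff_ne by auto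

lemma H1: assumes q: "q < 2^K" and p: "p < 2^K"
  shows "(\<Sum>f<2^K-1. g f q * g f p) = (if q = p then 2^K else 0) - 1"
proof -
  define t where "t k = real_of_int (iota q k) * real_of_int (iota p k)" for k
  have "(\<Sum>f<2^K-1. g f q * g f p) = (\<Sum>f<2^K-1. (\<lambda>A. \<Prod>k\<in>A. t k) (eff f))"
    unfolding gcoef_def t_def by (simp add: prod.distrib)
  also have "\<dots> = (\<Sum>A\<in>{A. A \<subseteq> {1..K} \<and> A \<noteq> {}}. \<Prod>k\<in>A. t k)"
    by (rule sum.reindex_bij_betw[OF eff])
  also have "\<dots> = (\<Sum>A\<in>Pow {1..K}. \<Prod>k\<in>A. t k) - 1"
  proof -
    have "Pow {1..K} = insert {} {A. A \<subseteq> {1..K} \<and> A \<noteq> {}}" by auto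
    hence "(\<Sum>A\<in>Pow {1..K}. \<Prod>k\<in>A. t k) = 1 + (\<Sum>A\<in>{A. A \<subseteq> {1..K} \<and> A \<noteq> {}}. \<Prod>k\<in>A. t k)"
      by (simp add: sum.insert_if)
    thus ?thesis by simp
  qed
  also have "(\<Sum>A\<in>Pow {1..K}. \<Prod>k\<in>A. t k) = (\<Prod>k\<in>{1..K}. t k + 1)"
    using prod_add[of "{1..K}" t "\<lambda>_. 1"] by simp
  also have "\<dots> = (if q = p then 2^K else 0)"
  proof (cases "q = p")
    case True
    hence "\<And>k. k \<in> {1..K} \<Longrightarrow> t k + 1 = 2" using iota_val[OF q] unfolding t_def by fastforce
    thus ?thesis using True by simp
  next
    case False
    then obtain k where k: "k \<in> {1..K}" "iota q k \<noteq> iota p k" using iota_inj[OF q p] by blast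
    hence "t k + 1 = 0" using iota_val[OF q k(1)] iota_val[OF p k(1)] unfolding t_def by auto
    thus ?thesis using False k by (intro trans[OF prod_zero]) auto
  qed
  finally show ?thesis .
qed

end


lemma exists_assign:
  fixes Q N :: nat and m :: "nat \<Rightarrow> nat"
  shows "(\<Sum>q<Q. m q) = N \<Longrightarrow> \<exists>z \<in> {..<N} \<rightarrow>\<^sub>E {..<Q}. \<forall>q<Q. card {i. i < N \<and> z i = q} = m q"
proof (induction Q arbitrary: N)
  case 0
  thus ?case by (auto intro!: bexI[of _ "\<lambda>_. undefined"])
next
  case (Suc Q)
  define N' where "N' = (\<Sum>q<Q. m q)"
  have N: "N = N' + m Q" using Suc.prems N'_def by simp
  obtain z' where z': "z' \<in> {..<N'} \<rightarrow>\<^sub>E {..<Q}" "\<forall>q<Q. card {i. i < N' \<and> z' i = q} = m q"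
    using Suc.IH[OF N'_def[symmetric]] by blast
  define z where "z i = (if i < N' then z' i else if i < N then Q else undefined)" for i
  have "z \<in> {..<N} \<rightarrow>\<^sub>E {..<Suc Q}" using z'(1) N unfolding PiE_iff extensional_def by (auto simp: z_def less_Suc_eq)
  moreover have "card {i. i < N \<and> z i = q} = m q" if q: "q < Suc Q" for q
  proof (cases "q < Q")
    case True
    have "{i. i < N \<and> z i = q} = {i. i < N' \<and> z' i = q}" using True N by (auto simp: z_def)
    thus ?thesis using z'(2) True by simp
  next
    case False
    hence qQ: "q = Q" using q by simp
    have "{i. i < N \<and> z i = q} = {N'..<N}" using qQ z'(1) N by (auto simp: z_def PiE_iff)
    thus ?thesis using N qQ by simp
  qed
  ultimately show ?case by blast
qed

definition sw :: "nat \<Rightarrow> nat \<Rightarrow> nat \<Rightarrow> nat" where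
  "sw a b i = (if i = a then b else if i = b then a else i)"

lemma sw_sw[simp]: "sw a b (sw a b i) = i" by (simp add: sw_def)
lemma sw_lt: "a < n \<Longrightarrow> b < n \<Longrightarrow> (sw a b i < n) = (i < n)" by (auto simp: sw_def)

context crfe begin

abbreviation "Om \<equiv> assignments n (2^K) nq"

lemma Om_fin: "finite Om"
proof -
  have "Om \<subseteq> {..<n} \<rightarrow>\<^sub>E {..<2^K}" unfolding assignments_def by auto
  thus ?thesis by (rule finite_subset) (simp add: finite_PiE)
qed

lemma Om_ne: "Om \<noteq> {}"
  using exists_assign[OF nq_sum] unfolding assignments_def by blast

lemma Om_card_pos: "real (card Om) > 0" using Om_fin Om_ne by (simp add: card_gt_0_iff)

lemma Om_range: "z \<in> Om \<Longrightarrow> i < n \<Longrightarrow> z i < 2^K"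
  unfolding assignments_def by (auto simp: PiE_iff)

lemma Om_count: "z \<in> Om \<Longrightarrow> q < 2^K \<Longrightarrow> card {i. i < n \<and> z i = q} = nq q"
  unfolding assignments_def by auto

lemma n_ge: "n \<ge> 2"
proof -
  have "(\<Sum>q<(2::nat)^K. 1) \<le> (\<Sum>q<(2::nat)^K. nq q)"
  proof (rule sum_mono)
    fix q assume "q \<in> {..<(2::nat)^K}" thus "1 \<le> nq q" by (intro nq_pos) simp
  qed
  hence "2^K \<le> n" using nq_sum by simp
  moreover have "(2::nat)^1 \<le> 2^K" by (rule power_increasing[OF K]) simp
  ultimately show ?thesis by simp
qed

lemma nq_pos': "q < 2^K \<Longrightarrow> real (nq q) > 0" using nq_pos[of q] by simp

lemma Om_swap:
  assumes z: "z \<in> Om" and a: "a < n" and b: "b < n"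
  shows "z \<circ> sw a b \<in> Om"
proof -
  have "z \<circ> sw a b \<in> {..<n} \<rightarrow>\<^sub>E {..<2^K}"
  proof -
    have "z \<in> {..<n} \<rightarrow>\<^sub>E {..<2^K}" using z unfolding assignments_def by auto
    thus ?thesis using a b unfolding PiE_iff extensional_def by (auto simp: sw_def)
  qed
  moreover have "card {i. i < n \<and> (z \<circ> sw a b) i = q} = nq q" if q: "q < 2^K" for q
  proof -
    have "{i. i < n \<and> (z \<circ> sw a b) i = q} = sw a b ` {i. i < n \<and> z i = q}"
    proof (rule equalityI; rule subsetI)
      fix i assume "i \<in> {i. i < n \<and> (z \<circ> sw a b) i = q}"
      hence i: "i < n" "z (sw a b i) = q" by auto
      show "i \<in> sw a b ` {i. i < n \<and> z i = q}"
        by (rule image_eqI[where x="sw a b i"]) (use i sw_lt[OF a b] in auto)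
    next
      fix i assume "i \<in> sw a b ` {i. i < n \<and> z i = q}"
      then obtain j where j: "i = sw a b j" "j < n" "z j = q" by auto
      show "i \<in> {i. i < n \<and> (z \<circ> sw a b) i = q}" using j sw_lt[OF a b] by simp
    qed
    moreover have "inj (sw a b)" by (metis injI sw_sw)
    ultimately show ?thesis using Om_count[OF z q] by (simp add: card_image inj_on_subset)
  qed
  ultimately show ?thesis unfolding assignments_def by auto
qed

lemma sum_Om_swap:
  assumes a: "a < n" and b: "b < n"
  shows "(\<Sum>z\<in>Om. \<phi> z) = (\<Sum>z\<in>Om. \<phi> (z \<circ> sw a b))"
proof -
  have inv: "(z \<circ> sw a b) \<circ> sw a b = z" for z :: "nat \<Rightarrow> nat" by (rule ext) (simp add: o_def)
  show ?thesis
    by (rule sum.reindex_bij_witness[where i="\<lambda>z. z \<circ> sw a b" and j="\<lambda>z. z \<circ> sw a b"])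
       (simp_all only: inv Om_swap[OF _ a b])
qed

definition P1 :: "nat \<Rightarrow> nat \<Rightarrow> real" where
  "P1 i q = (\<Sum>z\<in>Om. if z i = q then 1 else 0)"

definition P2 :: "nat \<Rightarrow> nat \<Rightarrow> nat \<Rightarrow> nat \<Rightarrow> real" where
  "P2 i j q q' = (\<Sum>z\<in>Om. if z i = q \<and> z j = q' then 1 else 0)"

lemma P1_sw: "a < n \<Longrightarrow> b < n \<Longrightarrow> P1 i q = P1 (sw a b i) q"
  unfolding P1_def using sum_Om_swap[of a b "\<lambda>z. if z i = q then 1 else 0"] unfolding o_def .

lemma P2_sw: "a < n \<Longrightarrow> b < n \<Longrightarrow> P2 i j q q' = P2 (sw a b i) (sw a b j) q q'"
  unfolding P2_def using sum_Om_swap[of a b "\<lambda>z. if z i = q \<and> z j = q' then 1 else 0"] unfolding o_def .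

lemma P1_const: assumes i: "i < n" shows "P1 i q = P1 0 q"
proof -
  have 0: "0 < n" using n_ge by simp
  have "sw i 0 i = 0" by (simp add: sw_def)
  thus ?thesis using P1_sw[OF i 0, of i q] by simp
qed

lemma P2_const: assumes i: "i < n" and j: "j < n" and ij: "i \<noteq> j" shows "P2 i j q q' = P2 0 1 q q'"
proof -
  have 0: "0 < n" and 1: "1 < n" using n_ge by simp_all
  define j1 where "j1 = sw i 0 j"
  have "sw i 0 i = 0" by (simp add: sw_def)
  hence e1: "P2 i j q q' = P2 0 j1 q q'" using P2_sw[OF i 0, of i j q q'] unfolding j1_def by simp
  have j1: "j1 < n" "j1 \<noteq> 0" using i j ij 0 unfolding j1_def sw_def by auto
  have "sw j1 1 0 = 0" "sw j1 1 j1 = 1" using j1 by (auto simp: sw_def)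
  hence "P2 0 j1 q q' = P2 0 1 q q'" using P2_sw[OF j1(1) 1, of 0 j1 q q'] by simp
  with e1 show ?thesis by simp
qed

lemma P1_val: assumes i: "i < n" and q: "q < 2^K" shows "P1 i q = card Om * nq q / n"
proof -
  have "(\<Sum>i<n. P1 i q) = (\<Sum>z\<in>Om. \<Sum>i<n. if z i = q then 1 else 0)"
    unfolding P1_def by (rule sum.swap)
  also have "\<dots> = (\<Sum>z\<in>Om. real (nq q))"
  proof (intro sum.cong refl)
    fix z assume z: "z \<in> Om"
    have "(\<Sum>i<n. if z i = q then 1 else 0) = real (card {i. i < n \<and> z i = q})"
    proof -
      have "{i. i < n \<and> z i = q} = {i \<in> {..<n}. z i = q}" by auto
      thus ?thesis using sum.inter_filter[of "{..<n}" "\<lambda>_. 1::real" "\<lambda>i. z i = q"] by simp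
    qed
    thus "(\<Sum>i<n. if z i = q then 1 else 0) = real (nq q)" using Om_count[OF z q] by simp
  qed
  finally have "(\<Sum>i<n. P1 i q) = card Om * nq q" by simp
  moreover have "(\<Sum>i<n. P1 i q) = (\<Sum>i<n. P1 0 q)" by (rule sum.cong) (auto intro: P1_const)
  ultimately have "n * P1 0 q = card Om * nq q" by simp
  hence "n * P1 i q = card Om * nq q" using P1_const[OF i] by simp
  thus ?thesis using i by (simp add: field_simps)
qed

end


lemma fcov_expand:
  assumes n: "n > 0"
  shows "fcov n f g = ((\<Sum>i<n. f i * g i) - (\<Sum>i<n. f i) * (\<Sum>i<n. g i) / n) / (real n - 1)"
proof -
  define mf where "mf = (\<Sum>i<n. f i) / n"
  define mg where "mg = (\<Sum>i<n. g i) / n"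
  have "(\<Sum>i<n. (f i - mf) * (g i - mg)) = (\<Sum>i<n. f i * g i - mg * f i - mf * g i + mf * mg)"
    by (rule sum.cong) (auto simp: algebra_simps)
  also have "\<dots> = (\<Sum>i<n. f i * g i) - mg * (\<Sum>i<n. f i) - mf * (\<Sum>i<n. g i) + n * mf * mg"
    by (simp add: sum.distrib sum_subtractf sum_distrib_left)
  also have "\<dots> = (\<Sum>i<n. f i * g i) - (\<Sum>i<n. f i) * (\<Sum>i<n. g i) / n"
    using n unfolding mf_def mg_def by (simp add: field_simps)
  finally show ?thesis unfolding fcov_def fmean_def mf_def mg_def by simp
qed

context crfe begin

lemma cnt_sum: "z \<in> Om \<Longrightarrow> q < 2^K \<Longrightarrow> (\<Sum>i<n. if z i = q then 1 else 0) = real (nq q)"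
proof -
  assume z: "z \<in> Om" and q: "q < 2^K"
  have "{i. i < n \<and> z i = q} = {i \<in> {..<n}. z i = q}" by auto
  hence "(\<Sum>i<n. if z i = q then 1 else 0) = real (card {i. i < n \<and> z i = q})"
    using sum.inter_filter[of "{..<n}" "\<lambda>_. 1::real" "\<lambda>i. z i = q"] by simp
  thus ?thesis using Om_count[OF z q] by simp
qed

lemma P2_val:
  assumes i: "i < n" and j: "j < n" and ij: "i \<noteq> j" and q: "q < 2^K" and q': "q' < 2^K"
  shows "P2 i j q q' = card Om * (real (nq q) * nq q' - (if q = q' then real (nq q) else 0)) / (n * (real n - 1))"
proof -
  have tot: "(\<Sum>i<n. \<Sum>j<n. P2 i j q q') = card Om * (real (nq q) * nq q')"
  proof -
    have "(\<Sum>i<n. \<Sum>j<n. P2 i j q q') = (\<Sum>z\<in>Om. (\<Sum>i<n. if z i = q then 1 else 0) * (\<Sum>j<n. if z j = q' then 1 else 0))"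
      unfolding P2_def sum_product
      by (subst sum.swap, rule sum.cong, simp, subst sum.swap, rule sum.cong, auto)
    also have "\<dots> = (\<Sum>z\<in>Om. real (nq q) * nq q')"
      by (rule sum.cong) (simp_all add: cnt_sum q q')
    finally show ?thesis by simp
  qed
  have diag: "(\<Sum>i<n. P2 i i q q') = (if q = q' then card Om * real (nq q) else 0)"
  proof -
    have "(\<Sum>i<n. P2 i i q q') = (\<Sum>z\<in>Om. \<Sum>i<n. if z i = q \<and> z i = q' then 1 else 0)"
      unfolding P2_def by (rule sum.swap)
    also have "\<dots> = (\<Sum>z\<in>Om. if q = q' then real (nq q) else 0)"
    proof (rule sum.cong)
      fix z assume z: "z \<in> Om"
      show "(\<Sum>i<n. if z i = q \<and> z i = q' then 1 else 0) = (if q = q' then real (nq q) else 0)"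
      proof (cases "q = q'")
        case True thus ?thesis using cnt_sum[OF z q] by simp
      next
        case False
        have "(\<Sum>i<n. if z i = q \<and> z i = q' then 1 else 0) = (0::real)"
          by (rule sum.neutral) (use False in auto)
        thus ?thesis using False by simp
      qed
    qed simp
    finally show ?thesis by simp
  qed
  have off: "(\<Sum>j<n. P2 i j q q') = P2 i i q q' + (real n - 1) * P2 0 1 q q'" if i: "i < n" for i
  proof -
    have "(\<Sum>j<n. P2 i j q q') = P2 i i q q' + (\<Sum>j\<in>{..<n} - {i}. P2 i j q q')"
      using i by (simp add: sum.remove)
    also have "(\<Sum>j\<in>{..<n} - {i}. P2 i j q q') = (\<Sum>j\<in>{..<n} - {i}. P2 0 1 q q')"
    proof (rule sum.cong)
      fix j assume "j \<in> {..<n} - {i}"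
      hence "j < n" "i \<noteq> j" by auto
      thus "P2 i j q q' = P2 0 1 q q'" by (rule P2_const[OF i])
    qed simp
    also have "\<dots> = (real n - 1) * P2 0 1 q q'" using i by (simp add: of_nat_diff)
    finally show ?thesis .
  qed
  define R where "R = card Om * (real (nq q) * nq q' - (if q = q' then real (nq q) else 0))"
  have RR: "R = card Om * (real (nq q) * nq q') - (if q = q' then card Om * real (nq q) else 0)"
    unfolding R_def by (simp add: algebra_simps)
  have "(\<Sum>i<n. \<Sum>j<n. P2 i j q q') = (\<Sum>i<n. P2 i i q q') + n * ((real n - 1) * P2 0 1 q q')"
    by (simp add: off sum.distrib)
  hence eq: "(n * (real n - 1)) * P2 0 1 q q' = R"
    unfolding RR using tot diag by (simp add: algebra_simps)
  moreover have "n * (real n - 1) \<noteq> 0" using n_ge by simp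
  ultimately have "P2 0 1 q q' = R / (n * (real n - 1))" by (simp add: eq_divide_eq ac_simps)
  thus ?thesis using P2_const[OF i j ij] unfolding R_def by simp
qed

end


lemma cov_set:
  fixes f g :: "'a \<Rightarrow> real"
  assumes "finite S" "S \<noteq> {}"
  shows "(\<Sum>z\<in>S. (f z - (\<Sum>w\<in>S. f w) / card S) * (g z - (\<Sum>w\<in>S. g w) / card S))
       = (\<Sum>z\<in>S. f z * g z) - (\<Sum>z\<in>S. f z) * (\<Sum>z\<in>S. g z) / card S"
proof -
  define mf where "mf = (\<Sum>w\<in>S. f w) / card S"
  define mg where "mg = (\<Sum>w\<in>S. g w) / card S"
  have c: "real (card S) > 0" using assms by (simp add: card_gt_0_iff)
  have "(\<Sum>z\<in>S. (f z - mf) * (g z - mg)) = (\<Sum>z\<in>S. f z * g z - mg * f z - mf * g z + mf * mg)"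
    by (rule sum.cong) (auto simp: algebra_simps)
  also have "\<dots> = (\<Sum>z\<in>S. f z * g z) - mg * (\<Sum>z\<in>S. f z) - mf * (\<Sum>z\<in>S. g z) + card S * mf * mg"
    by (simp add: sum.distrib sum_subtractf sum_distrib_left)
  also have "\<dots> = (\<Sum>z\<in>S. f z * g z) - (\<Sum>z\<in>S. f z) * (\<Sum>z\<in>S. g z) / card S"
    using c unfolding mf_def mg_def by (simp add: field_simps)
  finally show ?thesis unfolding mf_def mg_def .
qed

lemma sum_ind: "(x::nat) < m \<Longrightarrow> (\<Sum>q<m. f q * (if x = q then 1 else 0)) = (f x :: real)"
proof -
  assume x: "x < m"
  have "(\<Sum>q<m. f q * (if x = q then 1 else 0)) = f x * 1 + (\<Sum>q\<in>{..<m} - {x}. f q * (if x = q then 1 else 0))"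
    using x by (subst sum.remove[of _ x]) auto
  also have "(\<Sum>q\<in>{..<m} - {x}. f q * (if x = q then 1 else 0)) = 0"
    by (rule sum.neutral) auto
  finally show ?thesis by simp
qed

context crfe begin

lemma nq_ne0: "q < 2^K \<Longrightarrow> nq q \<noteq> 0" using nq_pos[of q] by simp

definition stat :: "(nat \<Rightarrow> nat \<Rightarrow> real) \<Rightarrow> (nat \<Rightarrow> nat) \<Rightarrow> real" where
  "stat a z = (\<Sum>i<n. a (z i) i)"

lemma fun1:
  assumes i: "i < n"
  shows "(\<Sum>z\<in>Om. \<phi> (z i)) = (\<Sum>q<2^K. \<phi> q * P1 i q)"
proof -
  have "(\<Sum>z\<in>Om. \<phi> (z i)) = (\<Sum>z\<in>Om. \<Sum>q<2^K. \<phi> q * (if z i = q then 1 else 0))"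
  proof (rule sum.cong)
    fix z assume z: "z \<in> Om"
    have "(\<Sum>q<2^K. \<phi> q * (if z i = q then 1 else 0)) = (\<Sum>q<2^K. if z i = q then \<phi> q else 0)"
      by (rule sum.cong) auto
    also have "\<dots> = \<phi> (z i)" using Om_range[OF z i] by (simp add: sum.delta)
    finally show "\<phi> (z i) = (\<Sum>q<2^K. \<phi> q * (if z i = q then 1 else 0))" by simp
  qed simp
  also have "\<dots> = (\<Sum>q<2^K. \<Sum>z\<in>Om. \<phi> q * (if z i = q then 1 else 0))" by (rule sum.swap)
  also have "\<dots> = (\<Sum>q<2^K. \<phi> q * P1 i q)" unfolding P1_def by (simp add: sum_distrib_left)
  finally show ?thesis .
qed

lemma fun2:
  assumes i: "i < n" and j: "j < n"
  shows "(\<Sum>z\<in>Om. \<phi> (z i) (z j)) = (\<Sum>q<2^K. \<Sum>q'<2^K. \<phi> q q' * P2 i j q q')"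
proof -
  have "(\<Sum>z\<in>Om. \<phi> (z i) (z j)) = (\<Sum>z\<in>Om. \<Sum>q<2^K. \<Sum>q'<2^K. \<phi> q q' * (if z i = q \<and> z j = q' then 1 else 0))"
  proof (rule sum.cong)
    fix z assume z: "z \<in> Om"
    have "(\<Sum>q<2^K. \<Sum>q'<2^K. \<phi> q q' * (if z i = q \<and> z j = q' then 1 else 0))
        = (\<Sum>q<2^K. (\<Sum>q'<2^K. \<phi> q q' * (if z j = q' then 1 else 0)) * (if z i = q then 1 else 0))"
      by (intro sum.cong) (auto simp: sum_distrib_right)
    also have "\<dots> = (\<Sum>q<2^K. \<phi> q (z j) * (if z i = q then 1 else 0))"
      using Om_range[OF z j] by (simp add: sum_ind)
    also have "\<dots> = \<phi> (z i) (z j)" using Om_range[OF z i] by (simp add: sum_ind)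
    finally show "\<phi> (z i) (z j) = (\<Sum>q<2^K. \<Sum>q'<2^K. \<phi> q q' * (if z i = q \<and> z j = q' then 1 else 0))" by simp
  qed simp
  also have "\<dots> = (\<Sum>q<2^K. \<Sum>z\<in>Om. \<Sum>q'<2^K. \<phi> q q' * (if z i = q \<and> z j = q' then 1 else 0))" by (rule sum.swap)
  also have "\<dots> = (\<Sum>q<2^K. \<Sum>q'<2^K. \<Sum>z\<in>Om. \<phi> q q' * (if z i = q \<and> z j = q' then 1 else 0))"
    by (intro sum.cong refl) (rule sum.swap)
  also have "\<dots> = (\<Sum>q<2^K. \<Sum>q'<2^K. \<phi> q q' * P2 i j q q')" unfolding P2_def by (simp add: sum_distrib_left)
  finally show ?thesis .
qed

lemma sum_stat: "(\<Sum>z\<in>Om. stat (\<lambda>q i. u q i / nq q) z) = card Om * (\<Sum>q<2^K. fmean n (u q))"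
proof -
  have "(\<Sum>z\<in>Om. stat (\<lambda>q i. u q i / nq q) z) = (\<Sum>i<n. \<Sum>z\<in>Om. u (z i) i / nq (z i))"
    unfolding stat_def by (rule sum.swap)
  also have "\<dots> = (\<Sum>i<n. \<Sum>q<2^K. u q i / nq q * P1 i q)"
  proof (rule sum.cong)
    fix i assume "i \<in> {..<n}"
    thus "(\<Sum>z\<in>Om. u (z i) i / nq (z i)) = (\<Sum>q<2^K. u q i / nq q * P1 i q)"
      using fun1[of i "\<lambda>q. u q i / nq q"] by simp
  qed simp
  also have "\<dots> = (\<Sum>i<n. \<Sum>q<2^K. card Om * (u q i / n))"
    by (intro sum.cong refl) (simp add: P1_val nq_ne0)
  also have "\<dots> = card Om * (\<Sum>q<2^K. fmean n (u q))"
    unfolding fmean_def by (simp add: sum_distrib_left sum_divide_distrib[symmetric] sum.swap[of _ "{..<n}"])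
  finally show ?thesis .
qed

end


context crfe begin

lemma E2_diag:
  fixes u v :: "nat \<Rightarrow> nat \<Rightarrow> real"
  assumes i: "i < n"
  shows "(\<Sum>z\<in>Om. u (z i) i / nq (z i) * (v (z i) i / nq (z i)))
       = card Om * ((\<Sum>q<2^K. u q i * v q i / nq q) / n)"
proof -
  have "(\<Sum>z\<in>Om. u (z i) i / nq (z i) * (v (z i) i / nq (z i)))
      = (\<Sum>q<2^K. u q i / nq q * (v q i / nq q) * P1 i q)"
    using fun1[OF i, of "\<lambda>q. u q i / nq q * (v q i / nq q)"] by simp
  also have "\<dots> = (\<Sum>q<2^K. card Om * (u q i * v q i / nq q / n))"
    by (intro sum.cong refl) (simp add: P1_val[OF i] nq_ne0 field_simps)
  finally show ?thesis by (simp add: sum_distrib_left sum_divide_distrib)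
qed

lemma E2_off:
  fixes u v :: "nat \<Rightarrow> nat \<Rightarrow> real"
  assumes i: "i < n" and j: "j < n" and ij: "i \<noteq> j"
  shows "(\<Sum>z\<in>Om. u (z i) i / nq (z i) * (v (z j) j / nq (z j)))
       = card Om * (((\<Sum>q<2^K. u q i) * (\<Sum>q<2^K. v q j) - (\<Sum>q<2^K. u q i * v q j / nq q)) / (n * (real n - 1)))"
proof -
  have D: "n * (real n - 1) > 0" using n_ge by simp
  have "(\<Sum>z\<in>Om. u (z i) i / nq (z i) * (v (z j) j / nq (z j)))
      = (\<Sum>q<2^K. \<Sum>q'<2^K. u q i / nq q * (v q' j / nq q') * P2 i j q q')"
    using fun2[OF i j, of "\<lambda>q q'. u q i / nq q * (v q' j / nq q')"] by simp
  also have "\<dots> = (\<Sum>q<2^K. \<Sum>q'<2^K. card Om / (n * (real n - 1)) *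
        (u q i * v q' j - (if q' = q then u q i * v q j / nq q else 0)))"
  proof (intro sum.cong refl)
    fix q q' :: nat assume q: "q \<in> {..<2^K}" and q': "q' \<in> {..<2^K}"
    have a: "real (nq q) \<noteq> 0" "real (nq q') \<noteq> 0" using q q' nq_ne0 by auto
    show "u q i / nq q * (v q' j / nq q') * P2 i j q q' = card Om / (n * (real n - 1)) *
        (u q i * v q' j - (if q' = q then u q i * v q j / nq q else 0))"
    proof -
      define DD where "DD = n * (real n - 1)"
      have DD: "DD \<noteq> 0" using D unfolding DD_def by linarith
      have P: "P2 i j q q' = card Om * (real (nq q) * nq q' - (if q = q' then real (nq q) else 0)) / DD"
        unfolding DD_def using P2_val[OF i j ij] q q' by simp
      show ?thesis unfolding P DD_def[symmetric] using a DD by (cases "q = q'") (auto simp: field_simps)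
    qed
  qed
  also have "\<dots> = card Om / (n * (real n - 1)) *
      ((\<Sum>q<2^K. u q i) * (\<Sum>q<2^K. v q j) - (\<Sum>q<2^K. u q i * v q j / nq q))"
  proof -
    have inner: "(\<Sum>q'<2^K. (u q i * v q' j - (if q' = q then u q i * v q j / nq q else 0)))
       = u q i * (\<Sum>q'<2^K. v q' j) - u q i * v q j / nq q" if "q < 2^K" for q
      using that by (simp add: sum_subtractf sum_distrib_left)
    have "(\<Sum>q<2^K. \<Sum>q'<2^K. card Om / (n * (real n - 1)) *
        (u q i * v q' j - (if q' = q then u q i * v q j / nq q else 0)))
      = card Om / (n * (real n - 1)) * (\<Sum>q<2^K. \<Sum>q'<2^K.
        (u q i * v q' j - (if q' = q then u q i * v q j / nq q else 0)))"
      by (simp add: sum_distrib_left)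
    also have "(\<Sum>q<2^K. \<Sum>q'<2^K. (u q i * v q' j - (if q' = q then u q i * v q j / nq q else 0)))
      = (\<Sum>q<2^K. u q i * (\<Sum>q'<2^K. v q' j) - u q i * v q j / nq q)"
      by (rule sum.cong) (simp_all add: inner)
    also have "\<dots> = (\<Sum>q<2^K. u q i) * (\<Sum>q<2^K. v q j) - (\<Sum>q<2^K. u q i * v q j / nq q)"
      by (simp add: sum_subtractf sum_distrib_right)
    finally show ?thesis .
  qed
  finally show ?thesis by simp
qed

end


context crfe begin

lemma sum_stat2:
  fixes u v :: "nat \<Rightarrow> nat \<Rightarrow> real"
  shows "(\<Sum>z\<in>Om. stat (\<lambda>q i. u q i / nq q) z * stat (\<lambda>q i. v q i / nq q) z)
    = card Om * (((\<Sum>i<n. \<Sum>q<2^K. u q i) * (\<Sum>i<n. \<Sum>q<2^K. v q i)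
          - (\<Sum>i<n. \<Sum>j<n. \<Sum>q<2^K. u q i * v q j / nq q)) / (n * (real n - 1))
       + (\<Sum>i<n. \<Sum>q<2^K. u q i * v q i / nq q) / n
       - ((\<Sum>i<n. (\<Sum>q<2^K. u q i) * (\<Sum>q<2^K. v q i)) - (\<Sum>i<n. \<Sum>q<2^K. u q i * v q i / nq q)) / (n * (real n - 1)))"
proof -
  define su where "su i = (\<Sum>q<2^K. u q i)" for i
  define sv where "sv i = (\<Sum>q<2^K. v q i)" for i
  define w where "w i j = (\<Sum>q<2^K. u q i * v q j / nq q)" for i j
  define D where "D = n * (real n - 1)"
  define e where "e i j = (su i * sv j - w i j) / D" for i j
  define d where "d i = w i i / n - e i i" for i
  define N where "N = real (card Om)"
  have "(\<Sum>z\<in>Om. stat (\<lambda>q i. u q i / nq q) z * stat (\<lambda>q i. v q i / nq q) z)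
      = (\<Sum>z\<in>Om. \<Sum>i<n. \<Sum>j<n. u (z i) i / nq (z i) * (v (z j) j / nq (z j)))"
    unfolding stat_def by (simp add: sum_product)
  also have "\<dots> = (\<Sum>i<n. \<Sum>z\<in>Om. \<Sum>j<n. u (z i) i / nq (z i) * (v (z j) j / nq (z j)))"
    by (rule sum.swap)
  also have "\<dots> = (\<Sum>i<n. \<Sum>j<n. \<Sum>z\<in>Om. u (z i) i / nq (z i) * (v (z j) j / nq (z j)))"
    by (intro sum.cong refl) (rule sum.swap)
  also have "\<dots> = (\<Sum>i<n. \<Sum>j<n. N * (e i j + (if j = i then d i else 0)))"
  proof (intro sum.cong refl)
    fix i j assume i: "i \<in> {..<n}" and j: "j \<in> {..<n}"
    show "(\<Sum>z\<in>Om. u (z i) i / nq (z i) * (v (z j) j / nq (z j))) = N * (e i j + (if j = i then d i else 0))"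
    proof (cases "i = j")
      case True
      thus ?thesis using E2_diag[of i u v] i unfolding d_def w_def N_def by simp
    next
      case False
      thus ?thesis using E2_off[of i j u v] i j unfolding e_def su_def sv_def w_def N_def D_def by simp
    qed
  qed
  also have "\<dots> = N * ((\<Sum>i<n. \<Sum>j<n. e i j) + (\<Sum>i<n. d i))"
    by (simp add: sum_distrib_left[symmetric] sum.distrib distrib_left)
  also have "(\<Sum>i<n. \<Sum>j<n. e i j) = ((\<Sum>i<n. su i) * (\<Sum>i<n. sv i) - (\<Sum>i<n. \<Sum>j<n. w i j)) / D"
    unfolding e_def by (simp add: sum_divide_distrib[symmetric] sum_subtractf sum_product)
  also have "(\<Sum>i<n. d i) = (\<Sum>i<n. w i i) / n - ((\<Sum>i<n. su i * sv i) - (\<Sum>i<n. w i i)) / D"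
    unfolding d_def e_def by (simp add: sum_divide_distrib[symmetric] sum_subtractf)
  finally show ?thesis unfolding su_def sv_def w_def D_def N_def by simp
qed

end


lemma arith1: "(nn::real) > 0 \<Longrightarrow> m > 0 \<Longrightarrow> d \<noteq> 0 \<Longrightarrow>
  ((P - U * V / nn) / m) / d = (P / d) / m - (U * V / d) / (nn * m)"
  by (simp add: field_simps)

lemma arith2: assumes m: "(m::real) > 0" and nn: "nn = m + 1"
  shows "(A * C - W1) / (nn * m) + W0 / nn - (S0 - W0) / (nn * m) - (A / nn) * (C / nn)
   = (W0 - W1 / nn) / m - ((S0 - A * C / nn) / m) / nn"
proof -
  have nn0: "nn > 0" using m nn by simp
  have "(A * C - W1) / (nn * m) + W0 / nn - (S0 - W0) / (nn * m) - (A / nn) * (C / nn)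
      - ((W0 - W1 / nn) / m - ((S0 - A * C / nn) / m) / nn)
      = A * C * (nn - m - 1) / (m * nn * nn) + W0 * (m + 1 - nn) / (nn * m)"
    using m nn0 by (simp add: field_simps)
  also have "\<dots> = 0" using nn by simp
  finally show ?thesis by simp
qed

lemma arith3: "(nn::real) > 0 \<Longrightarrow> x / m - y / (nn * m) = (x - y / nn) / m"
  by (cases "m = 0") (simp_all add: field_simps)

context crfe begin

lemma fmean_sum: fixes u :: "nat \<Rightarrow> nat \<Rightarrow> real"
  shows "(\<Sum>q<(2::nat)^K. fmean n (u q)) = (\<Sum>i<n. \<Sum>q<(2::nat)^K. u q i) / n"
  unfolding fmean_def by (simp add: sum_divide_distrib[symmetric] sum.swap[of _ "{..<n}"])

lemma mean_stat:
  fixes u :: "nat \<Rightarrow> nat \<Rightarrow> real"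
  assumes X: "\<And>z. z \<in> Om \<Longrightarrow> X z = stat (\<lambda>q i. u q i / nq q) z + cx"
  shows "Ex Om X = (\<Sum>q<2^K. fmean n (u q)) + cx"
proof -
  have "(\<Sum>z\<in>Om. X z) = (\<Sum>z\<in>Om. stat (\<lambda>q i. u q i / nq q) z + cx)" by (rule sum.cong) (simp_all add: X)
  also have "\<dots> = card Om * ((\<Sum>q<2^K. fmean n (u q)) + cx)" by (simp add: sum.distrib sum_stat algebra_simps)
  finally show ?thesis unfolding Ex_def using Om_card_pos by simp
qed

lemma cov_stat:
  fixes u v :: "nat \<Rightarrow> nat \<Rightarrow> real"
  assumes X: "\<And>z. z \<in> Om \<Longrightarrow> X z = stat (\<lambda>q i. u q i / nq q) z + cx"
    and W: "\<And>z. z \<in> Om \<Longrightarrow> W z = stat (\<lambda>q i. v q i / nq q) z + cw"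
  shows "Ex Om (\<lambda>z. (X z - Ex Om X) * (W z - Ex Om W))
     = (\<Sum>q<2^K. fcov n (u q) (v q) / nq q) - fcov n (\<lambda>i. \<Sum>q<2^K. u q i) (\<lambda>i. \<Sum>q<2^K. v q i) / n"
proof -
  define sa where "sa = stat (\<lambda>q i. u q i / nq q)"
  define sc where "sc = stat (\<lambda>q i. v q i / nq q)"
  define N where "N = real (card Om)"
  have N: "N > 0" using Om_card_pos unfolding N_def .
  define A where "A = (\<Sum>i<n. \<Sum>q<2^K. u q i)"
  define C where "C = (\<Sum>i<n. \<Sum>q<2^K. v q i)"
  define W1 where "W1 = (\<Sum>i<n. \<Sum>j<n. \<Sum>q<2^K. u q i * v q j / nq q)"
  define W0 where "W0 = (\<Sum>i<n. \<Sum>q<2^K. u q i * v q i / nq q)"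
  define S0 where "S0 = (\<Sum>i<n. (\<Sum>q<2^K. u q i) * (\<Sum>q<2^K. v q i))"
  have sa_sum: "(\<Sum>z\<in>Om. sa z) = N * (A / n)" unfolding sa_def N_def A_def using sum_stat fmean_sum by simp
  have sc_sum: "(\<Sum>z\<in>Om. sc z) = N * (C / n)" unfolding sc_def N_def C_def using sum_stat fmean_sum by simp
  have EX: "Ex Om X = (\<Sum>z\<in>Om. sa z) / N + cx"
    using mean_stat[OF X] sa_sum N unfolding A_def fmean_sum by simp
  have EW: "Ex Om W = (\<Sum>z\<in>Om. sc z) / N + cw"
    using mean_stat[OF W] sc_sum N unfolding C_def fmean_sum by simp
  have "Ex Om (\<lambda>z. (X z - Ex Om X) * (W z - Ex Om W))
     = (\<Sum>z\<in>Om. (sa z - (\<Sum>w\<in>Om. sa w) / card Om) * (sc z - (\<Sum>w\<in>Om. sc w) / card Om)) / N"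
  proof -
    have eqf: "(X z - Ex Om X) * (W z - Ex Om W) = (sa z - (\<Sum>w\<in>Om. sa w) / card Om) * (sc z - (\<Sum>w\<in>Om. sc w) / card Om)"
      if z: "z \<in> Om" for z
      unfolding EX EW using X[OF z] W[OF z] by (simp add: sa_def sc_def N_def)
    show ?thesis unfolding Ex_def[of Om "\<lambda>z. (X z - Ex Om X) * (W z - Ex Om W)"] N_def
      using sum.cong[OF refl eqf, of Om] by simp
  qed
  also have "\<dots> = ((\<Sum>z\<in>Om. sa z * sc z) - (\<Sum>z\<in>Om. sa z) * (\<Sum>z\<in>Om. sc z) / N) / N"
    unfolding cov_set[OF Om_fin Om_ne] N_def ..
  also have "(\<Sum>z\<in>Om. sa z * sc z) = N * ((A * C - W1) / (n * (real n - 1)) + W0 / n - (S0 - W0) / (n * (real n - 1)))"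
    unfolding sa_def sc_def N_def A_def C_def W1_def W0_def S0_def by (rule sum_stat2)
  finally have L0: "Ex Om (\<lambda>z. (X z - Ex Om X) * (W z - Ex Om W))
     = (N * ((A * C - W1) / (n * (real n - 1)) + W0 / n - (S0 - W0) / (n * (real n - 1))) - N * (A / n) * (N * (C / n)) / N) / N"
    unfolding sa_sum sc_sum .
  have "(N * ((A * C - W1) / (n * (real n - 1)) + W0 / n - (S0 - W0) / (n * (real n - 1))) - N * (A / n) * (N * (C / n)) / N) / N
     = (A * C - W1) / (n * (real n - 1)) + W0 / n - (S0 - W0) / (n * (real n - 1)) - (A / n) * (C / n)"
    using N by (simp add: field_simps)
  note L = trans[OF L0 this]
  have n0: "real n > 0" using n_ge by simp
  have F1: "(\<Sum>q<2^K. fcov n (u q) (v q) / nq q) = (W0 - W1 / n) / (real n - 1)"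
  proof -
    have "(\<Sum>q<2^K. fcov n (u q) (v q) / nq q) = (\<Sum>q<2^K.
        (\<Sum>i<n. u q i * v q i / nq q) / (real n - 1) - (\<Sum>i<n. \<Sum>j<n. u q i * v q j / nq q) / (n * (real n - 1)))"
    proof (rule sum.cong)
      fix q assume "q \<in> {..<(2::nat)^K}"
      hence nq0: "real (nq q) \<noteq> 0" using nq_ne0 by simp
      have "(\<Sum>i<n. \<Sum>j<n. u q i * v q j / nq q) = (\<Sum>i<n. u q i) * (\<Sum>i<n. v q i) / nq q"
        by (simp add: sum_product sum_divide_distrib)
      moreover have "(\<Sum>i<n. u q i * v q i / nq q) = (\<Sum>i<n. u q i * v q i) / nq q"
        by (simp add: sum_divide_distrib)
      ultimately show "fcov n (u q) (v q) / nq q = (\<Sum>i<n. u q i * v q i / nq q) / (real n - 1) - (\<Sum>i<n. \<Sum>j<n. u q i * v q j / nq q) / (n * (real n - 1))"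
        unfolding fcov_expand[OF n0[simplified]] using arith1[OF n0 _ nq0, of "real n - 1"] n_ge by simp
    qed simp
    also have "\<dots> = (\<Sum>q<2^K. \<Sum>i<n. u q i * v q i / nq q) / (real n - 1)
        - (\<Sum>q<2^K. \<Sum>i<n. \<Sum>j<n. u q i * v q j / nq q) / (n * (real n - 1))"
      by (simp add: sum_subtractf sum_divide_distrib)
    also have "(\<Sum>q<2^K. \<Sum>i<n. u q i * v q i / nq q) = W0"
      unfolding W0_def by (rule sum.swap)
    also have "(\<Sum>q<2^K. \<Sum>i<n. \<Sum>j<n. u q i * v q j / nq q) = W1"
    proof -
      have "(\<Sum>q<2^K. \<Sum>i<n. \<Sum>j<n. u q i * v q j / nq q) = (\<Sum>i<n. \<Sum>q<2^K. \<Sum>j<n. u q i * v q j / nq q)"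
        by (rule sum.swap)
      also have "\<dots> = W1" unfolding W1_def by (rule sum.cong[OF refl]) (rule sum.swap)
      finally show ?thesis .
    qed
    also have "W0 / (real n - 1) - W1 / (n * (real n - 1)) = (W0 - W1 / n) / (real n - 1)"
      using n0 n_ge by (simp add: arith3)
    finally show ?thesis .
  qed
  have F2: "fcov n (\<lambda>i. \<Sum>q<2^K. u q i) (\<lambda>i. \<Sum>q<2^K. v q i) = (S0 - A * C / n) / (real n - 1)"
    unfolding fcov_expand[OF n0[simplified]] S0_def A_def C_def ..
  have n1: "real n - 1 > 0" using n_ge by simp
  show ?thesis unfolding L F1 F2 by (rule arith2[OF n1]) simp
qed

end


lemma mat_inv_eq:
  fixes A W :: "real mat"
  assumes A: "A \<in> carrier_mat n n" and W: "W \<in> carrier_mat n n" and AW: "A * W = 1\<^sub>m n"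
  shows "mat_inv A = W"
proof -
  have WA: "W * A = 1\<^sub>m n" using mat_mult_left_right_inverse[OF A W AW] .
  show ?thesis
  proof (cases "mat_inverse A")
    case None
    from mat_inverse(1)[OF A None, of undefined] have "A \<notin> Units (ring_mat TYPE(real) n undefined)" .
    moreover have "A \<in> Units (ring_mat TYPE(real) n undefined)"
      using A W AW WA unfolding Units_def by (auto simp: ring_mat_simps)
    ultimately show ?thesis by blast
  next
    case (Some B)
    from mat_inverse(2)[OF A Some] have B: "A * B = 1\<^sub>m n" "B * A = 1\<^sub>m n" "B \<in> carrier_mat n n" by auto
    have "B = B * (A * W)" using B(3) AW by simp
    also have "\<dots> = (B * A) * W" using A B(3) W by (simp add: assoc_mult_mat)
    also have "\<dots> = W" using B(2) W by simp
    finally show ?thesis unfolding mat_inv_def Some by simp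
  qed
qed

lemma idx_lt: "(f::nat) < a \<Longrightarrow> l < b \<Longrightarrow> f*b + l < a*b"
proof -
  assume fl: "f < a" "l < b"
  have "f * b + l < f * b + b" using fl by simp
  also have "\<dots> = (f+1) * b" by simp
  also have "\<dots> \<le> a * b" using fl by (intro mult_right_mono) auto
  finally show ?thesis .
qed

lemma idx_div: "(r::nat) < a*b \<Longrightarrow> r div b < a"
  by (metis less_mult_imp_div_less mult.commute)

lemma idx_mod: "(r::nat) < a*b \<Longrightarrow> r mod b < b"
  by (cases "b = 0") auto

lemma sum_reindex_prod:
  fixes \<phi> :: "nat \<Rightarrow> real"
  shows "(\<Sum>r<a*b. \<phi> r) = (\<Sum>f<a. \<Sum>l<b. \<phi> (f*b + l))"
proof -
  have "(\<Sum>f<a. \<Sum>l<b. \<phi> (f*b + l)) = (\<Sum>p\<in>{..<a} \<times> {..<b}. \<phi> (fst p * b + snd p))"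
    by (simp add: sum.cartesian_product case_prod_beta)
  also have "\<dots> = (\<Sum>r<a*b. \<phi> r)"
    by (rule sum.reindex_bij_witness[where i="\<lambda>r. (r div b, r mod b)" and j="\<lambda>p. fst p * b + snd p"])
       (auto simp: idx_lt idx_div idx_mod)
  finally show ?thesis by simp
qed

lemma mult_entry:
  fixes A B :: "real mat"
  assumes "i < dim_row A" "j < dim_col B" "dim_col A = dim_row B"
  shows "(A * B) $$ (i,j) = (\<Sum>k<dim_row B. A $$ (i,k) * B $$ (k,j))"
  using assms by (simp add: scalar_prod_def atLeast0LessThan)

lemma mulv_entry:
  fixes A :: "real mat"
  assumes "i < dim_row A" "dim_col A = dim_vec v"
  shows "(A *\<^sub>v v) $ i = (\<Sum>k<dim_vec v. A $$ (i,k) * v $ k)"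
  using assms by (simp add: scalar_prod_def atLeast0LessThan)

lemma kron_dims[simp]: "dim_row (kron A B) = dim_row A * dim_row B" "dim_col (kron A B) = dim_col A * dim_col B"
  unfolding kron_def by simp_all

lemma kron_entry: "i < dim_row A * dim_row B \<Longrightarrow> j < dim_col A * dim_col B \<Longrightarrow>
  kron A B $$ (i,j) = A $$ (i div dim_row B, j div dim_col B) * B $$ (i mod dim_row B, j mod dim_col B)"
  unfolding kron_def by simp

lemma outer_dims[simp]: "dim_row (outer u v) = dim_vec u" "dim_col (outer u v) = dim_vec v"
  unfolding outer_def by simp_all

lemma outer_entry: "i < dim_vec u \<Longrightarrow> j < dim_vec v \<Longrightarrow> outer u v $$ (i,j) = u $ i * v $ j"
  unfolding outer_def by simp

lemma fmean_scale: "fmean n (\<lambda>i. a * f i) = a * fmean n f"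
  unfolding fmean_def by (simp add: sum_distrib_left)

lemma fmean_add: "fmean n (\<lambda>i. f1 i + f2 i) = fmean n f1 + fmean n f2"
  unfolding fmean_def by (simp add: sum.distrib add_divide_distrib)

lemma fcov_scale_left: "fcov n (\<lambda>i. a * f i) g = a * fcov n f g"
proof -
  have "(\<Sum>i<n. (a * f i - fmean n (\<lambda>i. a * f i)) * (g i - fmean n g)) = a * (\<Sum>i<n. (f i - fmean n f) * (g i - fmean n g))"
    unfolding fmean_scale sum_distrib_left by (rule sum.cong) (simp_all add: algebra_simps)
  thus ?thesis unfolding fcov_def by simp
qed

lemma fcov_comm: "fcov n f g = fcov n g f"
  unfolding fcov_def by (simp add: mult.commute)

lemma fcov_scale_right: "fcov n f (\<lambda>i. a * g i) = a * fcov n f g"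
  using fcov_scale_left[of n a g f] by (simp add: fcov_comm)

lemma fcov_zero_right: "fcov n f (\<lambda>i. 0) = 0"
  unfolding fcov_def fmean_def by simp

lemma fcov_add_left: "fcov n (\<lambda>i. f1 i + f2 i) g = fcov n f1 g + fcov n f2 g"
proof -
  have "(\<Sum>i<n. (f1 i + f2 i - fmean n (\<lambda>i. f1 i + f2 i)) * (g i - fmean n g))
     = (\<Sum>i<n. (f1 i - fmean n f1) * (g i - fmean n g)) + (\<Sum>i<n. (f2 i - fmean n f2) * (g i - fmean n g))"
    unfolding fmean_add sum.distrib[symmetric] by (rule sum.cong) (simp_all add: algebra_simps)
  thus ?thesis unfolding fcov_def by (simp add: add_divide_distrib)
qed

lemma fcov_const_left: "fcov n (\<lambda>i. c) g = 0"
  unfolding fcov_def fmean_def by (cases "n = 0") simp_all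

lemma fcov_sum_left: "finite S \<Longrightarrow> fcov n (\<lambda>i. \<Sum>k\<in>S. f k i) g = (\<Sum>k\<in>S. fcov n (f k) g)"
proof (induction S rule: finite_induct)
  case empty thus ?case by (simp add: fcov_const_left)
next
  case (insert a S) thus ?case by (simp add: fcov_add_left)
qed

lemma fcov_sum_right: "finite S \<Longrightarrow> fcov n g (\<lambda>i. \<Sum>k\<in>S. f k i) = (\<Sum>k\<in>S. fcov n g (f k))"
  using fcov_sum_left[of S n f g] by (simp add: fcov_comm)


lemma kron_mult:
  fixes A B C D :: "real mat"
  assumes A: "A \<in> carrier_mat a b" and B: "B \<in> carrier_mat c d" and C: "C \<in> carrier_mat b e" and D: "D \<in> carrier_mat d k"
  shows "kron A B * kron C D = kron (A * C) (B * D)"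
proof (rule eq_matI)
  show "dim_row (kron A B * kron C D) = dim_row (kron (A * C) (B * D))" using A B by simp
  show "dim_col (kron A B * kron C D) = dim_col (kron (A * C) (B * D))" using C D by simp
  fix i j assume i: "i < dim_row (kron (A * C) (B * D))" and j: "j < dim_col (kron (A * C) (B * D))"
  hence i': "i < a * c" and j': "j < e * k" using A B C D by auto
  have "(kron A B * kron C D) $$ (i, j) = (\<Sum>t<b*d. kron A B $$ (i,t) * kron C D $$ (t,j))"
    using A B C D i' j' by (subst mult_entry) auto
  also have "\<dots> = (\<Sum>u<b. \<Sum>v<d. kron A B $$ (i,u*d+v) * kron C D $$ (u*d+v,j))"
    by (rule sum_reindex_prod)
  also have "\<dots> = (\<Sum>u<b. \<Sum>v<d. A $$ (i div c, u) * C $$ (u, j div k) * (B $$ (i mod c, v) * D $$ (v, j mod k)))"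
  proof (intro sum.cong refl)
    fix u v assume u: "u \<in> {..<b}" and v: "v \<in> {..<d}"
    have t: "u*d+v < b*d" using u v idx_lt by auto
    show "kron A B $$ (i,u*d+v) * kron C D $$ (u*d+v,j) = A $$ (i div c, u) * C $$ (u, j div k) * (B $$ (i mod c, v) * D $$ (v, j mod k))"
      using A B C D i' j' t u v by (simp add: kron_entry)
  qed
  also have "\<dots> = (\<Sum>u<b. A $$ (i div c, u) * C $$ (u, j div k)) * (\<Sum>v<d. B $$ (i mod c, v) * D $$ (v, j mod k))"
    by (simp add: sum_product)
  also have "\<dots> = (A * C) $$ (i div c, j div k) * (B * D) $$ (i mod c, j mod k)"
  proof -
    have e1: "(A * C) $$ (i div c, j div k) = (\<Sum>u<b. A $$ (i div c, u) * C $$ (u, j div k))"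
      using A C i' j' idx_div[OF i'] idx_div[of j e k] by (subst mult_entry) (auto simp: mult.commute)
    have e2: "(B * D) $$ (i mod c, j mod k) = (\<Sum>v<d. B $$ (i mod c, v) * D $$ (v, j mod k))"
      using B D i' j' idx_mod[OF i'] idx_mod[of j e k] by (subst mult_entry) auto
    show ?thesis unfolding e1 e2 ..
  qed
  also have "\<dots> = kron (A * C) (B * D) $$ (i, j)"
    using A B C D i' j' by (simp add: kron_entry)
  finally show "(kron A B * kron C D) $$ (i, j) = kron (A * C) (B * D) $$ (i, j)" .
qed

lemma kron_one: "kron (1\<^sub>m a) (1\<^sub>m b) = (1\<^sub>m (a*b) :: real mat)"
proof (rule eq_matI)
  fix i j assume "i < dim_row (1\<^sub>m (a*b) :: real mat)" "j < dim_col (1\<^sub>m (a*b) :: real mat)"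
  hence i: "i < a*b" and j: "j < a*b" by auto
  have "(i div b = j div b \<and> i mod b = j mod b) = (i = j)" by (metis div_mult_mod_eq)
  thus "kron (1\<^sub>m a) (1\<^sub>m b) $$ (i, j) = (1\<^sub>m (a*b) :: real mat) $$ (i, j)"
    using i j by (simp add: kron_entry idx_div idx_mod) (metis div_mult_mod_eq)
qed simp_all

locale crfe2 = crfe +
  fixes L :: nat and Y x :: "nat \<Rightarrow> nat \<Rightarrow> real"
  assumes Sxx_nonsing: "invertible_mat (Sxx n L x)"
begin

abbreviation "Sx \<equiv> Sxx n L x"
abbreviation "Si \<equiv> mat_inv (Sxx n L x)"
abbreviation "hh \<equiv> (1::real) / 2^(K-1)"

lemma Sx_carrier: "Sx \<in> carrier_mat L L" unfolding Sxx_def by simp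

lemma Si_props: "Si \<in> carrier_mat L L" "Sx * Si = 1\<^sub>m L" "Si * Sx = 1\<^sub>m L"
proof -
  obtain B where B: "inverts_mat Sx B" "inverts_mat B Sx" using Sxx_nonsing unfolding invertible_mat_def by blast
  have Bc: "B \<in> carrier_mat L L"
  proof -
    have 1: "Sx * B = 1\<^sub>m L" using B(1) Sx_carrier unfolding inverts_mat_def by simp
    have 2: "B * Sx = 1\<^sub>m (dim_row B)" using B(2) unfolding inverts_mat_def by simp
    have "dim_col B = L" using arg_cong[OF 1, of dim_col] by simp
    moreover have "dim_row B = L" using arg_cong[OF 2, of dim_col] Sx_carrier by simp
    ultimately show ?thesis by auto
  qed
  have SB: "Sx * B = 1\<^sub>m L" using B(1) Sx_carrier unfolding inverts_mat_def by simp
  have eq: "Si = B" by (rule mat_inv_eq[OF Sx_carrier Bc SB])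
  show "Si \<in> carrier_mat L L" "Sx * Si = 1\<^sub>m L" "Si * Sx = 1\<^sub>m L"
    unfolding eq using Bc SB mat_mult_left_right_inverse[OF Sx_carrier Bc SB] by auto
qed

end


lemma sum3_swap: "(\<Sum>f\<in>A. \<Sum>p\<in>B. \<Sum>q\<in>C. T f p q) = (\<Sum>p\<in>B. \<Sum>q\<in>C. \<Sum>f\<in>A. (T f p q :: real))"
proof -
  have "(\<Sum>f\<in>A. \<Sum>p\<in>B. \<Sum>q\<in>C. T f p q) = (\<Sum>p\<in>B. \<Sum>f\<in>A. \<Sum>q\<in>C. T f p q)" by (rule sum.swap)
  also have "\<dots> = (\<Sum>p\<in>B. \<Sum>q\<in>C. \<Sum>f\<in>A. T f p q)" by (rule sum.cong[OF refl]) (rule sum.swap)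
  finally show ?thesis .
qed

context crfe2 begin

abbreviation "FF \<equiv> (2::nat)^K - 1"

definition pp :: "nat \<Rightarrow> real" where "pp q = real (nq q) / real n"
definition dd :: "nat \<Rightarrow> nat \<Rightarrow> real" where "dd q f = g f q - (\<Sum>p<2^K. pp p * g f p)"

definition MM :: "real mat" where
  "MM = mat FF FF (\<lambda>(f,f'). c2 K * (\<Sum>q<2^K. (1 / real (nq q)) * (g f q * g f' q)))"
definition Minv :: "real mat" where
  "Minv = mat FF FF (\<lambda>(f1,f2). (1/4) * (\<Sum>q<2^K. real (nq q) * (dd q f1 * dd q f2)))"

lemma sum_pp: "(\<Sum>q<2^K. pp q) = 1"
proof -
  have "(\<Sum>q<2^K. real (nq q)) = real n" by (simp only: of_nat_sum[symmetric] nq_sum)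
  thus ?thesis unfolding pp_def using n_ge by (simp add: sum_divide_distrib[symmetric])
qed

lemma cQ: "c2 K * 2^K * 2^K = 4"
proof -
  have "(2::real)^K = 2 * 2^(K-1)" using K by (metis One_nat_def Suc_pred' not_one_le_zero power_Suc zero_less_iff_neq_zero)
  thus ?thesis unfolding c2_def by (simp add: power2_eq_square)
qed

lemma hQ: "hh * 2^K = 2"
proof -
  have "(2::real)^K = 2 * 2^(K-1)" using K by (metis One_nat_def Suc_pred' not_one_le_zero power_Suc zero_less_iff_neq_zero)
  thus ?thesis by simp
qed

lemma c2_hh: "c2 K = hh * hh" unfolding c2_def by (simp add: power2_eq_square)

lemma DG: assumes q: "q < 2^K" and p: "p < 2^K"
  shows "(\<Sum>f<FF. dd q f * g f p) = 2^K * ((if q = p then 1 else 0) - pp p)"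
proof -
  have "(\<Sum>f<FF. dd q f * g f p) = (\<Sum>f<FF. g f q * g f p) - (\<Sum>f<FF. \<Sum>s<2^K. pp s * (g f s * g f p))"
  proof -
    have "dd q f * g f p = g f q * g f p - (\<Sum>s<2^K. pp s * (g f s * g f p))" for f
      unfolding dd_def by (simp add: left_diff_distrib sum_distrib_right mult.assoc)
    thus ?thesis by (simp add: sum_subtractf)
  qed
  also have "(\<Sum>f<FF. \<Sum>s<2^K. pp s * (g f s * g f p)) = (\<Sum>s<2^K. pp s * (\<Sum>f<FF. g f s * g f p))"
    by (subst sum.swap) (simp add: sum_distrib_left)
  also have "\<dots> = (\<Sum>s<2^K. pp s * ((if s = p then 2^K else 0) - 1))"
  proof (rule sum.cong)
    fix s assume "s \<in> {..<(2::nat)^K}"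
    hence s: "s < 2^K" by simp
    show "pp s * (\<Sum>f<FF. g f s * g f p) = pp s * ((if s = p then 2^K else 0) - 1)"
      using H1[OF s p] by simp
  qed simp
  also have "\<dots> = (\<Sum>s<2^K. (if s = p then pp s * 2^K else 0)) - (\<Sum>s<2^K. pp s)"
  proof -
    have "pp s * ((if s = p then 2^K else 0) - 1) = (if s = p then pp s * 2^K else 0) - pp s" for s
      by (simp add: algebra_simps)
    thus ?thesis by (simp add: sum_subtractf)
  qed
  also have "\<dots> = pp p * 2^K - 1" using p by (simp add: sum_pp sum.delta')
  finally show ?thesis using H1[OF q p] by (simp add: algebra_simps)
qed

lemma DN: "(\<Sum>q<2^K. real (nq q) * dd q f) = 0"
proof -
  have "(\<Sum>q<2^K. real (nq q) * dd q f) = (\<Sum>q<2^K. real (nq q) * g f q) - (\<Sum>q<2^K. real (nq q)) * (\<Sum>p<2^K. pp p * g f p)"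
    unfolding dd_def by (simp add: algebra_simps sum_subtractf sum_distrib_right)
  also have "(\<Sum>q<2^K. real (nq q)) = n" by (simp only: of_nat_sum[symmetric] nq_sum)
  also have "(\<Sum>p<2^K. pp p * g f p) = (\<Sum>q<2^K. real (nq q) * g f q) / n"
    unfolding pp_def by (simp add: sum_divide_distrib)
  finally show ?thesis using n_ge by simp
qed

lemma GD: assumes f1: "f1 < FF" and f2: "f2 < FF"
  shows "(\<Sum>p<2^K. g f1 p * dd p f2) = 2^K * (if f1 = f2 then 1 else 0)"
proof -
  have "(\<Sum>p<2^K. g f1 p * dd p f2) = (\<Sum>p<2^K. g f1 p * g f2 p) - (\<Sum>p<2^K. g f1 p) * (\<Sum>s<2^K. pp s * g f2 s)"
    unfolding dd_def by (simp add: algebra_simps sum_subtractf sum_distrib_right)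
  thus ?thesis using H3[OF f1 f2] H2[OF f1] by simp
qed

end


lemma sum_if_minus:
  fixes X r :: real and a b :: "nat \<Rightarrow> real"
  assumes p: "p < m"
  shows "(\<Sum>q<m. X * ((if q = p then a q else 0) - r * b q)) = X * (a p - r * (\<Sum>q<m. b q))"
proof -
  have "(\<Sum>q<m. X * ((if q = p then a q else 0) - r * b q)) = X * (\<Sum>q<m. ((if q = p then a q else 0) - r * b q))"
    by (rule sum_distrib_left[symmetric])
  also have "(\<Sum>q<m. ((if q = p then a q else 0) - r * b q)) = (\<Sum>q<m. (if q = p then a q else 0)) - r * (\<Sum>q<m. b q)"
    by (simp only: sum_subtractf sum_distrib_left)
  also have "(\<Sum>q<m. (if q = p then a q else 0)) = a p" using p by simp
  finally show ?thesis .
qed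

context crfe2 begin

lemma MM_carrier: "MM \<in> carrier_mat FF FF" unfolding MM_def by simp
lemma Minv_carrier: "Minv \<in> carrier_mat FF FF" unfolding Minv_def by simp

lemma MM_Minv: "MM * Minv = 1\<^sub>m FF"
proof (rule eq_matI)
  fix f1 f2 assume "f1 < dim_row (1\<^sub>m FF :: real mat)" "f2 < dim_col (1\<^sub>m FF :: real mat)"
  hence f1: "f1 < FF" and f2: "f2 < FF" by auto
  define c where "c = c2 K"
  define Q where "Q = (2::real)^K"
  have "(MM * Minv) $$ (f1,f2) = (\<Sum>f<FF. MM $$ (f1,f) * Minv $$ (f,f2))"
    using f1 f2 MM_carrier Minv_carrier by (subst mult_entry) auto
  also have "\<dots> = (\<Sum>f<FF. \<Sum>p<2^K. \<Sum>q<2^K. (c/4) * (g f1 p / nq p) * (nq q * dd q f2) * (dd q f * g f p))"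
  proof (rule sum.cong[OF refl])
    fix f assume "f \<in> {..<FF}"
    hence f: "f < FF" by simp
    have "MM $$ (f1,f) * Minv $$ (f,f2) = (c * (\<Sum>p<2^K. (1 / real (nq p)) * (g f1 p * g f p))) *
           ((1/4) * (\<Sum>q<2^K. real (nq q) * (dd q f * dd q f2)))"
      unfolding MM_def Minv_def c_def using f f1 f2 by simp
    also have "\<dots> = (\<Sum>p<2^K. \<Sum>q<2^K. (c * ((1 / real (nq p)) * (g f1 p * g f p))) * ((1/4) * (real (nq q) * (dd q f * dd q f2))))"
      unfolding sum_distrib_left[of c] sum_distrib_left[of "1/4"] by (rule sum_product)
    also have "\<dots> = (\<Sum>p<2^K. \<Sum>q<2^K. (c/4) * (g f1 p / nq p) * (nq q * dd q f2) * (dd q f * g f p))"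
      by (intro sum.cong refl) (simp add: field_simps)
    finally show "MM $$ (f1,f) * Minv $$ (f,f2) = (\<Sum>p<2^K. \<Sum>q<2^K. (c/4) * (g f1 p / nq p) * (nq q * dd q f2) * (dd q f * g f p))" .
  qed
  also have "\<dots> = (\<Sum>p<2^K. \<Sum>q<2^K. \<Sum>f<FF. (c/4) * (g f1 p / nq p) * (nq q * dd q f2) * (dd q f * g f p))"
    by (rule sum3_swap)
  also have "\<dots> = (\<Sum>p<2^K. \<Sum>q<2^K. (c/4) * (g f1 p / nq p) * (nq q * dd q f2) * (Q * ((if q = p then 1 else 0) - pp p)))"
  proof (intro sum.cong refl)
    fix p q assume p: "p \<in> {..<(2::nat)^K}" and q: "q \<in> {..<(2::nat)^K}"
    show "(\<Sum>f<FF. (c/4) * (g f1 p / nq p) * (nq q * dd q f2) * (dd q f * g f p)) =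
        (c/4) * (g f1 p / nq p) * (nq q * dd q f2) * (Q * ((if q = p then 1 else 0) - pp p))"
      unfolding sum_distrib_left[symmetric] using DG[of q p] p q unfolding Q_def by simp
  qed
  also have "\<dots> = (\<Sum>p<2^K. (c/4) * Q * (g f1 p * dd p f2))"
  proof (rule sum.cong[OF refl])
    fix p assume pK: "p \<in> {..<(2::nat)^K}"
    hence p: "p < 2^K" by simp
    have "(\<Sum>q<2^K. (c/4) * (g f1 p / nq p) * (nq q * dd q f2) * (Q * ((if q = p then 1 else 0) - pp p)))
       = (\<Sum>q<2^K. (c/4) * Q * (g f1 p / nq p) * ((if q = p then nq q * dd q f2 else 0) - pp p * (nq q * dd q f2)))"
    proof (rule sum.cong[OF refl])
      fix q
      show "(c/4) * (g f1 p / nq p) * (nq q * dd q f2) * (Q * ((if q = p then 1 else 0) - pp p))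
         = (c/4) * Q * (g f1 p / nq p) * ((if q = p then nq q * dd q f2 else 0) - pp p * (nq q * dd q f2))"
        by (cases "q = p") (simp_all add: algebra_simps)
    qed
    also have "\<dots> = (c/4) * Q * (g f1 p / nq p) * (nq p * dd p f2 - pp p * (\<Sum>q<2^K. nq q * dd q f2))"
      by (rule sum_if_minus[OF p])
    also have "\<dots> = (c/4) * Q * (g f1 p * dd p f2)"
      using DN[of f2] nq_ne0[OF p] by simp
    finally show "(\<Sum>q<2^K. (c/4) * (g f1 p / nq p) * (nq q * dd q f2) * (Q * ((if q = p then 1 else 0) - pp p)))
       = (c/4) * Q * (g f1 p * dd p f2)" .
  qed
  also have "\<dots> = (c/4) * Q * (\<Sum>p<2^K. g f1 p * dd p f2)" by (simp add: sum_distrib_left)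
  also have "\<dots> = (c * Q * Q / 4) * (if f1 = f2 then 1 else 0)" using GD[OF f1 f2] unfolding Q_def by simp
  also have "\<dots> = (1\<^sub>m FF :: real mat) $$ (f1, f2)" using cQ f1 f2 unfolding c_def Q_def by simp
  finally show "(MM * Minv) $$ (f1, f2) = (1\<^sub>m FF :: real mat) $$ (f1, f2)" .
qed (use MM_carrier Minv_carrier in auto)

end


context crfe2 begin

abbreviation "VXX \<equiv> Vxx K n L eff iota nq x"
abbreviation "VTX \<equiv> Vtx K n L eff iota nq Y x"

lemma bvec_dim[simp]: "dim_vec (bvec K eff iota q) = FF" unfolding bvec_def by simp
lemma bvec_idx[simp]: "f < FF \<Longrightarrow> bvec K eff iota q $ f = g f q" unfolding bvec_def by simp

lemma Vxx_kron: "VXX = kron MM Sx"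
proof (rule eq_matI)
  show "dim_row VXX = dim_row (kron MM Sx)" "dim_col VXX = dim_col (kron MM Sx)"
    unfolding Vxx_def MM_def Sxx_def by simp_all
  fix r s assume "r < dim_row (kron MM Sx)" "s < dim_col (kron MM Sx)"
  hence r: "r < FF * L" and s: "s < FF * L" unfolding MM_def Sxx_def by simp_all
  have rd: "r div L < FF" "r mod L < L" using idx_div[OF r] idx_mod[OF r] .
  have sd: "s div L < FF" "s mod L < L" using idx_div[OF s] idx_mod[OF s] .
  have "VXX $$ (r,s) = c2 K * (\<Sum>q<2^K. (1 / real (nq q)) * ((g (r div L) q * g (s div L) q) * Sx $$ (r mod L, s mod L)))"
    unfolding Vxx_def using r s rd sd by (simp add: kron_entry outer_entry Sx_carrier[unfolded carrier_mat_def, simplified])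
  also have "\<dots> = MM $$ (r div L, s div L) * Sx $$ (r mod L, s mod L)"
    unfolding MM_def using rd sd by (simp add: sum_distrib_right mult.assoc)
  also have "\<dots> = kron MM Sx $$ (r,s)"
    using r s by (simp add: kron_entry MM_def Sx_carrier[unfolded carrier_mat_def, simplified])
  finally show "VXX $$ (r,s) = kron MM Sx $$ (r,s)" .
qed

lemma Vxx_inv: "mat_inv VXX = kron Minv Si"
proof -
  have "VXX * kron Minv Si = kron (MM * Minv) (Sx * Si)"
    unfolding Vxx_kron by (rule kron_mult[OF MM_carrier Sx_carrier Minv_carrier Si_props(1)])
  also have "\<dots> = 1\<^sub>m (FF * L)" unfolding MM_Minv Si_props(2) by (rule kron_one)
  finally have e: "VXX * kron Minv Si = 1\<^sub>m (FF * L)" .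
  have c1: "VXX \<in> carrier_mat (FF*L) (FF*L)" unfolding Vxx_def by simp
  have c2: "kron Minv Si \<in> carrier_mat (FF*L) (FF*L)" using Minv_carrier Si_props(1) by auto
  show ?thesis by (rule mat_inv_eq[OF c1 c2 e])
qed

end


context crfe2 begin

lemma stat_group:
  assumes z: "z \<in> Om"
  shows "stat a z = (\<Sum>q<2^K. \<Sum>i\<in>{i. i < n \<and> z i = q}. a q i)"
proof -
  have "stat a z = (\<Sum>i<n. \<Sum>q<2^K. a q i * (if z i = q then 1 else 0))"
    unfolding stat_def by (rule sum.cong[OF refl]) (simp add: sum_ind Om_range[OF z])
  also have "\<dots> = (\<Sum>q<2^K. \<Sum>i<n. a q i * (if z i = q then 1 else 0))" by (rule sum.swap)
  also have "\<dots> = (\<Sum>q<2^K. \<Sum>i\<in>{i. i < n \<and> z i = q}. a q i)"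
  proof (rule sum.cong[OF refl])
    fix q
    have "{i. i < n \<and> z i = q} = {i \<in> {..<n}. z i = q}" by auto
    hence "(\<Sum>i\<in>{i. i < n \<and> z i = q}. a q i) = (\<Sum>i<n. if z i = q then a q i else 0)"
      using sum.inter_filter[of "{..<n}" "a q" "\<lambda>i. z i = q"] by simp
    also have "\<dots> = (\<Sum>i<n. a q i * (if z i = q then 1 else 0))" by (rule sum.cong) auto
    finally show "(\<Sum>i<n. a q i * (if z i = q then 1 else 0)) = (\<Sum>i\<in>{i. i < n \<and> z i = q}. a q i)" by simp
  qed
  finally show ?thesis .
qed

lemma tauhat_stat:
  assumes z: "z \<in> Om" and f: "f < FF"
  shows "tauhat K n eff iota nq W z $ f = stat (\<lambda>q i. (hh * g f q * W i q) / nq q) z"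
proof -
  have "tauhat K n eff iota nq W z $ f = hh * (\<Sum>q<2^K. g f q * Yhat n nq W z q)"
    unfolding tauhat_def using f by simp
  also have "\<dots> = (\<Sum>q<2^K. \<Sum>i\<in>{i. i < n \<and> z i = q}. (hh * g f q * W i q) / nq q)"
    unfolding Yhat_def sum_distrib_left
    by (rule sum.cong[OF refl]) (simp add: sum_distrib_left sum_divide_distrib mult.assoc)
  also have "\<dots> = stat (\<lambda>q i. (hh * g f q * W i q) / nq q) z" by (rule stat_group[OF z, symmetric])
  finally show ?thesis .
qed

lemma tau_mean: assumes f: "f < FF" shows "tau K n eff iota W $ f = (\<Sum>q<2^K. fmean n (\<lambda>i. hh * g f q * W i q))"
proof -
  have "tau K n eff iota W $ f = hh * (\<Sum>q<2^K. g f q * fmean n (\<lambda>i. W i q))" unfolding tau_def using f by simp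
  also have "\<dots> = (\<Sum>q<2^K. hh * g f q * fmean n (\<lambda>i. W i q))" by (simp add: sum_distrib_left mult.assoc)
  also have "\<dots> = (\<Sum>q<2^K. fmean n (\<lambda>i. hh * g f q * W i q))"
    by (rule sum.cong[OF refl]) (rule fmean_scale[symmetric])
  finally show ?thesis .
qed

lemma tauhat_x_eq:
  assumes r: "r < FF * L"
  shows "tauhat_x K n L eff iota nq x z $ r = tauhat K n eff iota nq (\<lambda>i q. x i (r mod L)) z $ (r div L)"
  unfolding tauhat_x_def tauhat_def xhat_def Yhat_def using r idx_div[OF r] by simp

lemma tau_ind_idx: "f < FF \<Longrightarrow> tau_ind K eff iota W i $ f = (\<Sum>q<2^K. hh * g f q * W i q)"
  unfolding tau_ind_def by (simp add: sum_distrib_left mult.assoc)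

lemma cov_gen:
  assumes f1: "f1 < FF" and f2: "f2 < FF"
    and X: "\<And>z. z \<in> Om \<Longrightarrow> X z = tauhat K n eff iota nq W1 z $ f1 + cx"
    and V: "\<And>z. z \<in> Om \<Longrightarrow> V z = tauhat K n eff iota nq W2 z $ f2 + cw"
  shows "Ex Om (\<lambda>z. (X z - Ex Om X) * (V z - Ex Om V))
    = c2 K * (\<Sum>q<2^K. (1 / real (nq q)) * (g f1 q * g f2 q * fcov n (\<lambda>i. W1 i q) (\<lambda>i. W2 i q)))
      - (1 / real n) * fcov n (\<lambda>i. tau_ind K eff iota W1 i $ f1) (\<lambda>i. tau_ind K eff iota W2 i $ f2)"
proof -
  have "Ex Om (\<lambda>z. (X z - Ex Om X) * (V z - Ex Om V))
    = (\<Sum>q<2^K. fcov n (\<lambda>i. hh * g f1 q * W1 i q) (\<lambda>i. hh * g f2 q * W2 i q) / nq q)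
      - fcov n (\<lambda>i. \<Sum>q<2^K. hh * g f1 q * W1 i q) (\<lambda>i. \<Sum>q<2^K. hh * g f2 q * W2 i q) / n"
    by (rule cov_stat[of X "\<lambda>q i. hh * g f1 q * W1 i q" cx V "\<lambda>q i. hh * g f2 q * W2 i q" cw])
       (simp_all only: X V tauhat_stat f1 f2)
  also have "(\<Sum>q<2^K. fcov n (\<lambda>i. hh * g f1 q * W1 i q) (\<lambda>i. hh * g f2 q * W2 i q) / nq q)
     = c2 K * (\<Sum>q<2^K. (1 / real (nq q)) * (g f1 q * g f2 q * fcov n (\<lambda>i. W1 i q) (\<lambda>i. W2 i q)))"
  proof -
    have "fcov n (\<lambda>i. hh * g f1 q * W1 i q) (\<lambda>i. hh * g f2 q * W2 i q) = (hh * g f1 q) * ((hh * g f2 q) * fcov n (\<lambda>i. W1 i q) (\<lambda>i. W2 i q))" for q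
      using fcov_scale_left[of n "hh * g f1 q" "\<lambda>i. W1 i q"] fcov_scale_right[of n _ "hh * g f2 q" "\<lambda>i. W2 i q"] by simp
    thus ?thesis unfolding c2_hh by (simp add: sum_distrib_left algebra_simps)
  qed
  also have "(\<lambda>i. \<Sum>q<2^K. hh * g f1 q * W1 i q) = (\<lambda>i. tau_ind K eff iota W1 i $ f1)" using tau_ind_idx[OF f1] by simp
  also have "(\<lambda>i. \<Sum>q<2^K. hh * g f2 q * W2 i q) = (\<lambda>i. tau_ind K eff iota W2 i $ f2)" using tau_ind_idx[OF f2] by simp
  finally show ?thesis by simp
qed

lemma mean_gen:
  assumes f: "f < FF" and X: "\<And>z. z \<in> Om \<Longrightarrow> X z = tauhat K n eff iota nq W z $ f + cx"
  shows "Ex Om X = tau K n eff iota W $ f + cx"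
  unfolding tau_mean[OF f] by (rule mean_stat[of X "\<lambda>q i. hh * g f q * W i q" cx]) (simp only: X tauhat_stat f)

end


context crfe2 begin

abbreviation "Th \<equiv> (\<lambda>z. tauhat K n eff iota nq Y z - tau K n eff iota Y)"
abbreviation "Tx \<equiv> tauhat_x K n L eff iota nq x"

lemma tauhat_dim[simp]: "dim_vec (tauhat K n eff iota nq W z) = FF" unfolding tauhat_def by simp
lemma tau_dim[simp]: "dim_vec (tau K n eff iota W) = FF" unfolding tau_def by simp
lemma Tx_dim[simp]: "dim_vec (Tx z) = FF * L" unfolding tauhat_x_def by simp

lemma Th_idx: "f < FF \<Longrightarrow> Th z $ f = tauhat K n eff iota nq Y z $ f + - (tau K n eff iota Y $ f)"
  by simp

lemma Tx_idx: "r < FF * L \<Longrightarrow> Tx z $ r = tauhat K n eff iota nq (\<lambda>i q. x i (r mod L)) z $ (r div L) + 0"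
  using tauhat_x_eq by simp

lemma tau_x_zero: assumes f: "f < FF" shows "tau K n eff iota (\<lambda>i q. x i l) $ f = 0"
  unfolding tau_def using f H2[OF f] by (simp add: sum_distrib_right[symmetric])

lemma tau_ind_x_zero: assumes f: "f < FF" shows "tau_ind K eff iota (\<lambda>i q. x i l) i $ f = 0"
  unfolding tau_ind_def using f H2[OF f] by (simp add: sum_distrib_right[symmetric])

lemma Exv_Th: "Exv FF Om Th = 0\<^sub>v FF"
proof (rule eq_vecI)
  fix f assume "f < dim_vec (0\<^sub>v FF :: real vec)"
  hence f: "f < FF" by simp
  have "Ex Om (\<lambda>z. Th z $ f) = tau K n eff iota Y $ f + - (tau K n eff iota Y $ f)"
    by (rule mean_gen[OF f]) (rule Th_idx[OF f])
  thus "Exv FF Om Th $ f = 0\<^sub>v FF $ f" unfolding Exv_def using f by simp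
qed (simp add: Exv_def)

lemma Exv_Tx: "Exv (FF*L) Om Tx = 0\<^sub>v (FF*L)"
proof (rule eq_vecI)
  fix r assume "r < dim_vec (0\<^sub>v (FF*L) :: real vec)"
  hence r: "r < FF*L" by simp
  have "Ex Om (\<lambda>z. Tx z $ r) = tau K n eff iota (\<lambda>i q. x i (r mod L)) $ (r div L) + 0"
    by (rule mean_gen[OF idx_div[OF r]]) (rule Tx_idx[OF r])
  thus "Exv (FF*L) Om Tx $ r = 0\<^sub>v (FF*L) $ r" unfolding Exv_def using r tau_x_zero[OF idx_div[OF r]] by simp
qed (simp add: Exv_def)

lemma Sqx_entry: "l < L \<Longrightarrow> Sqx n L Y x q $$ (0, l) = fcov n (\<lambda>i. Y i q) (\<lambda>i. x i l)"
  unfolding Sqx_def by simp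

lemma Vtx_entry:
  assumes f: "f < FF" and r: "r < FF * L"
  shows "VTX $$ (f, r) = c2 K * (\<Sum>q<2^K. (1 / real (nq q)) * (g f q * g (r div L) q * fcov n (\<lambda>i. Y i q) (\<lambda>i. x i (r mod L))))"
proof -
  have d: "dim_row (Sqx n L Y x q) = 1" "dim_col (Sqx n L Y x q) = L" for q unfolding Sqx_def by simp_all
  show ?thesis unfolding Vtx_def using f r idx_div[OF r] idx_mod[OF r]
    by (simp add: kron_entry outer_entry d Sqx_entry)
qed

lemma Vxx_entry:
  assumes r: "r < FF * L" and s: "s < FF * L"
  shows "VXX $$ (r, s) = c2 K * (\<Sum>q<2^K. (1 / real (nq q)) * (g (r div L) q * g (s div L) q * fcov n (\<lambda>i. x i (r mod L)) (\<lambda>i. x i (s mod L))))"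
proof -
  have d: "dim_row Sx = L" "dim_col Sx = L" unfolding Sxx_def by simp_all
  show ?thesis unfolding Vxx_def using r s idx_div[OF r] idx_mod[OF r] idx_div[OF s] idx_mod[OF s]
    by (simp add: kron_entry outer_entry d Sxx_def)
qed

lemma Covm_Th_Tx: "Covm FF (FF*L) Om Th Tx = VTX"
proof (rule eq_matI)
  fix f r assume "f < dim_row VTX" "r < dim_col VTX"
  hence f: "f < FF" and r: "r < FF * L" unfolding Vtx_def by simp_all
  have "Ex Om (\<lambda>z. (Th z $ f - Ex Om (\<lambda>w. Th w $ f)) * (Tx z $ r - Ex Om (\<lambda>w. Tx w $ r)))
     = c2 K * (\<Sum>q<2^K. (1 / real (nq q)) * (g f q * g (r div L) q * fcov n (\<lambda>i. Y i q) (\<lambda>i. x i (r mod L))))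
      - (1 / real n) * fcov n (\<lambda>i. tau_ind K eff iota Y i $ f) (\<lambda>i. tau_ind K eff iota (\<lambda>i q. x i (r mod L)) i $ (r div L))"
    by (rule cov_gen[OF f idx_div[OF r]]) (rule Th_idx[OF f], rule Tx_idx[OF r])
  also have "fcov n (\<lambda>i. tau_ind K eff iota Y i $ f) (\<lambda>i. tau_ind K eff iota (\<lambda>i q. x i (r mod L)) i $ (r div L)) = 0"
    using tau_ind_x_zero[OF idx_div[OF r]] by (simp add: fcov_zero_right)
  finally have A: "Ex Om (\<lambda>z. (Th z $ f - Ex Om (\<lambda>w. Th w $ f)) * (Tx z $ r - Ex Om (\<lambda>w. Tx w $ r)))
     = c2 K * (\<Sum>q<2^K. (1 / real (nq q)) * (g f q * g (r div L) q * fcov n (\<lambda>i. Y i q) (\<lambda>i. x i (r mod L))))"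
    by simp
  have C: "Covm FF (FF*L) Om Th Tx $$ (f, r) = Ex Om (\<lambda>z. (Th z $ f - Ex Om (\<lambda>w. Th w $ f)) * (Tx z $ r - Ex Om (\<lambda>w. Tx w $ r)))"
    unfolding Covm_def using f r by (simp only: index_mat split)
  show "Covm FF (FF*L) Om Th Tx $$ (f, r) = VTX $$ (f, r)"
    unfolding C A Vtx_entry[OF f r] ..
qed (simp_all add: Covm_def Vtx_def)

lemma Covm_Tx_Tx: "Covm (FF*L) (FF*L) Om Tx Tx = VXX"
proof (rule eq_matI)
  fix r s assume "r < dim_row VXX" "s < dim_col VXX"
  hence r: "r < FF * L" and s: "s < FF * L" unfolding Vxx_def by simp_all
  have "Ex Om (\<lambda>z. (Tx z $ r - Ex Om (\<lambda>w. Tx w $ r)) * (Tx z $ s - Ex Om (\<lambda>w. Tx w $ s)))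
     = c2 K * (\<Sum>q<2^K. (1 / real (nq q)) * (g (r div L) q * g (s div L) q * fcov n (\<lambda>i. x i (r mod L)) (\<lambda>i. x i (s mod L))))
      - (1 / real n) * fcov n (\<lambda>i. tau_ind K eff iota (\<lambda>i q. x i (r mod L)) i $ (r div L)) (\<lambda>i. tau_ind K eff iota (\<lambda>i q. x i (s mod L)) i $ (s div L))"
    by (rule cov_gen[OF idx_div[OF r] idx_div[OF s]]) (simp_all add: Tx_idx[OF r] Tx_idx[OF s])
  also have "fcov n (\<lambda>i. tau_ind K eff iota (\<lambda>i q. x i (r mod L)) i $ (r div L)) (\<lambda>i. tau_ind K eff iota (\<lambda>i q. x i (s mod L)) i $ (s div L)) = 0"
    using tau_ind_x_zero[OF idx_div[OF s]] by (simp add: fcov_zero_right)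
  finally have A: "Ex Om (\<lambda>z. (Tx z $ r - Ex Om (\<lambda>w. Tx w $ r)) * (Tx z $ s - Ex Om (\<lambda>w. Tx w $ s)))
     = c2 K * (\<Sum>q<2^K. (1 / real (nq q)) * (g (r div L) q * g (s div L) q * fcov n (\<lambda>i. x i (r mod L)) (\<lambda>i. x i (s mod L))))"
    by simp
  have C: "Covm (FF*L) (FF*L) Om Tx Tx $$ (r, s) = Ex Om (\<lambda>z. (Tx z $ r - Ex Om (\<lambda>w. Tx w $ r)) * (Tx z $ s - Ex Om (\<lambda>w. Tx w $ s)))"
    unfolding Covm_def using r s by (simp only: index_mat split)
  show "Covm (FF*L) (FF*L) Om Tx Tx $$ (r, s) = VXX $$ (r, s)"
    unfolding C A Vxx_entry[OF r s] ..
qed (simp_all add: Covm_def Vxx_def)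

lemma linproj_eq: "lin_proj FF (FF*L) Om Th Tx z = (VTX * mat_inv VXX) *\<^sub>v Tx z"
proof -
  have d: "dim_row (VTX * mat_inv VXX) = FF" unfolding Vtx_def by simp
  have e1: "Tx z - 0\<^sub>v (FF*L) = Tx z" by (intro eq_vecI) simp_all
  have cv: "(VTX * mat_inv VXX) *\<^sub>v Tx z \<in> carrier_vec FF"
    by (rule carrier_vecI) (simp only: dim_mult_mat_vec d)
  show ?thesis unfolding lin_proj_def Exv_Th Exv_Tx Covm_Th_Tx Covm_Tx_Tx e1
    by (rule left_zero_vec[OF cv])
qed

end


context crfe2 begin

definition xbar :: "nat \<Rightarrow> real" where "xbar l = fmean n (\<lambda>j. x j l)"
definition bq :: "nat \<Rightarrow> nat \<Rightarrow> real" where "bq q l = (\<Sum>m<L. Sqx n L Y x q $$ (0,m) * Si $$ (m,l))"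

lemma Sqx_dims[simp]: "dim_row (Sqx n L Y x q) = 1" "dim_col (Sqx n L Y x q) = L" unfolding Sqx_def by simp_all

lemma Ypar_lin: "Ypar n L Y x i q = fmean n (\<lambda>j. Y j q) + (\<Sum>l<L. bq q l * (x i l - xbar l))"
proof -
  define v where "v = vec L (\<lambda>l. x i l - fmean n (\<lambda>j. x j l))"
  have Sic: "dim_row Si = L" "dim_col Si = L" using Si_props(1) by auto
  have "(Sqx n L Y x q *\<^sub>v (Si *\<^sub>v v)) $ 0 = (\<Sum>m<L. Sqx n L Y x q $$ (0,m) * (Si *\<^sub>v v) $ m)"
    using Sic by (subst mulv_entry) (simp_all add: v_def)
  also have "\<dots> = (\<Sum>m<L. Sqx n L Y x q $$ (0,m) * (\<Sum>l<L. Si $$ (m,l) * (x i l - xbar l)))"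
  proof (rule sum.cong[OF refl])
    fix m assume "m \<in> {..<L}"
    hence m: "m < L" by simp
    have "(Si *\<^sub>v v) $ m = (\<Sum>l<dim_vec v. Si $$ (m,l) * v $ l)"
      by (rule mulv_entry) (simp_all add: Sic m v_def)
    also have "\<dots> = (\<Sum>l<L. Si $$ (m,l) * (x i l - xbar l))"
      unfolding v_def xbar_def by (intro sum.cong) simp_all
    finally show "Sqx n L Y x q $$ (0,m) * (Si *\<^sub>v v) $ m = Sqx n L Y x q $$ (0,m) * (\<Sum>l<L. Si $$ (m,l) * (x i l - xbar l))"
      by simp
  qed
  also have "\<dots> = (\<Sum>m<L. \<Sum>l<L. Sqx n L Y x q $$ (0,m) * Si $$ (m,l) * (x i l - xbar l))"
    by (simp add: sum_distrib_left mult.assoc)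
  also have "\<dots> = (\<Sum>l<L. \<Sum>m<L. Sqx n L Y x q $$ (0,m) * Si $$ (m,l) * (x i l - xbar l))" by (rule sum.swap)
  also have "\<dots> = (\<Sum>l<L. bq q l * (x i l - xbar l))" unfolding bq_def by (simp add: sum_distrib_right)
  finally show ?thesis unfolding Ypar_def v_def[symmetric] by simp
qed

lemma fmean_Ypar: "fmean n (\<lambda>i. Ypar n L Y x i q) = fmean n (\<lambda>j. Y j q)"
proof -
  have z: "(\<Sum>i<n. x i l - xbar l) = 0" for l
    unfolding xbar_def fmean_def using n_ge by (simp add: sum_subtractf)
  have "(\<Sum>i<n. Ypar n L Y x i q) = n * fmean n (\<lambda>j. Y j q) + (\<Sum>i<n. \<Sum>l<L. bq q l * (x i l - xbar l))"
    unfolding Ypar_lin by (simp add: sum.distrib)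
  also have "(\<Sum>i<n. \<Sum>l<L. bq q l * (x i l - xbar l)) = (\<Sum>l<L. bq q l * (\<Sum>i<n. x i l - xbar l))"
    by (subst sum.swap) (simp add: sum_distrib_left)
  also have "\<dots> = 0" using z by simp
  finally show ?thesis unfolding fmean_def using n_ge by simp
qed

lemma card_S: "z \<in> Om \<Longrightarrow> q < 2^K \<Longrightarrow> real (card {i. i < n \<and> z i = q}) = real (nq q)"
  using Om_count by simp

lemma Yhat_Ypar:
  assumes z: "z \<in> Om" and q: "q < 2^K"
  shows "Yhat n nq (Ypar n L Y x) z q = fmean n (\<lambda>j. Y j q) + (\<Sum>l<L. bq q l * (xhat n nq x z q l - xbar l))"
proof -
  define S where "S = {i. i < n \<and> z i = q}"
  have fin: "finite S" unfolding S_def by simp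
  have cS: "real (card S) = nq q" unfolding S_def using card_S[OF z q] .
  have nq0: "real (nq q) \<noteq> 0" using nq_ne0[OF q] by simp
  have "(\<Sum>i\<in>S. Ypar n L Y x i q) = nq q * fmean n (\<lambda>j. Y j q) + (\<Sum>l<L. bq q l * ((\<Sum>i\<in>S. x i l) - nq q * xbar l))"
  proof -
    have "(\<Sum>i\<in>S. Ypar n L Y x i q) = card S * fmean n (\<lambda>j. Y j q) + (\<Sum>i\<in>S. \<Sum>l<L. bq q l * (x i l - xbar l))"
      unfolding Ypar_lin by (simp add: sum.distrib)
    also have "(\<Sum>i\<in>S. \<Sum>l<L. bq q l * (x i l - xbar l)) = (\<Sum>l<L. bq q l * (\<Sum>i\<in>S. x i l - xbar l))"
      by (subst sum.swap) (simp add: sum_distrib_left)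
    also have "\<dots> = (\<Sum>l<L. bq q l * ((\<Sum>i\<in>S. x i l) - card S * xbar l))"
      by (simp add: sum_subtractf)
    finally show ?thesis unfolding cS .
  qed
  hence "Yhat n nq (Ypar n L Y x) z q = (nq q * fmean n (\<lambda>j. Y j q) + (\<Sum>l<L. bq q l * ((\<Sum>i\<in>S. x i l) - nq q * xbar l))) / nq q"
    unfolding Yhat_def S_def by simp
  also have "\<dots> = fmean n (\<lambda>j. Y j q) + (\<Sum>l<L. bq q l * ((\<Sum>i\<in>S. x i l) - nq q * xbar l) / nq q)"
    using nq0 by (simp add: add_divide_distrib sum_divide_distrib)
  also have "(\<Sum>l<L. bq q l * ((\<Sum>i\<in>S. x i l) - nq q * xbar l) / nq q) = (\<Sum>l<L. bq q l * (xhat n nq x z q l - xbar l))"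
    unfolding xhat_def S_def[symmetric] using nq0 by (intro sum.cong refl) (simp add: field_simps)
  finally show ?thesis .
qed

lemma key_par:
  assumes z: "z \<in> Om" and f: "f < FF"
  shows "tauhat K n eff iota nq (Ypar n L Y x) z $ f - tau K n eff iota (Ypar n L Y x) $ f
       = hh * (\<Sum>q<2^K. g f q * (\<Sum>l<L. bq q l * (xhat n nq x z q l - xbar l)))"
proof -
  have "tauhat K n eff iota nq (Ypar n L Y x) z $ f = hh * (\<Sum>q<2^K. g f q * (fmean n (\<lambda>j. Y j q) + (\<Sum>l<L. bq q l * (xhat n nq x z q l - xbar l))))"
    unfolding tauhat_def using f by (simp add: Yhat_Ypar[OF z])
  moreover have "tau K n eff iota (Ypar n L Y x) $ f = hh * (\<Sum>q<2^K. g f q * fmean n (\<lambda>j. Y j q))"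
    unfolding tau_def using f by (simp add: fmean_Ypar)
  ultimately show ?thesis by (simp add: distrib_left sum.distrib algebra_simps)
qed

lemma sum_nq_xhat:
  assumes z: "z \<in> Om"
  shows "(\<Sum>q<2^K. nq q * xhat n nq x z q l) = n * xbar l"
proof -
  have "(\<Sum>q<2^K. nq q * xhat n nq x z q l) = (\<Sum>q<2^K. \<Sum>i\<in>{i. i < n \<and> z i = q}. x i l)"
    unfolding xhat_def by (rule sum.cong[OF refl]) (simp add: nq_ne0)
  also have "\<dots> = stat (\<lambda>q i. x i l) z" by (rule stat_group[OF z, symmetric])
  also have "\<dots> = n * xbar l" unfolding stat_def xbar_def fmean_def using n_ge by simp
  finally show ?thesis .
qed

lemma MG:
  assumes f2: "f2 < FF" and p: "p < 2^K"
  shows "(\<Sum>f'<FF. Minv $$ (f2,f') * g f' p) = (2^K / 4) * nq p * dd p f2"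
proof -
  have "(\<Sum>f'<FF. Minv $$ (f2,f') * g f' p) = (\<Sum>f'<FF. \<Sum>q<2^K. (1/4) * (nq q * dd q f2) * (dd q f' * g f' p))"
    unfolding Minv_def using f2 by (intro sum.cong refl) (simp add: sum_distrib_left sum_distrib_right algebra_simps)
  also have "\<dots> = (\<Sum>q<2^K. (1/4) * (nq q * dd q f2) * (\<Sum>f'<FF. dd q f' * g f' p))"
    by (subst sum.swap) (simp add: sum_distrib_left)
  also have "\<dots> = (\<Sum>q<2^K. (2^K / 4) * ((if q = p then nq q * dd q f2 else 0) - pp p * (nq q * dd q f2)))"
  proof (rule sum.cong[OF refl])
    fix q assume "q \<in> {..<(2::nat)^K}"
    hence q: "q < 2^K" by simp
    show "(1/4) * (nq q * dd q f2) * (\<Sum>f'<FF. dd q f' * g f' p) = (2^K / 4) * ((if q = p then nq q * dd q f2 else 0) - pp p * (nq q * dd q f2))"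
      unfolding DG[OF q p] by (cases "q = p") (simp_all add: field_simps)
  qed
  also have "\<dots> = (2^K / 4) * (nq p * dd p f2 - pp p * (\<Sum>q<2^K. nq q * dd q f2))"
    by (rule sum_if_minus[OF p])
  finally show ?thesis using DN[of f2] by simp
qed

end


context crfe2 begin

lemma Si_dims[simp]: "dim_row Si = L" "dim_col Si = L" using Si_props(1) by auto
lemma Minv_dims[simp]: "dim_row Minv = FF" "dim_col Minv = FF" unfolding Minv_def by auto

lemma Tx_entry2: "f' < FF \<Longrightarrow> l < L \<Longrightarrow> Tx z $ (f'*L + l) = hh * (\<Sum>p<2^K. g f' p * xhat n nq x z p l)"
proof -
  assume f': "f' < FF" and l: "l < L"
  have r: "f'*L + l < FF * L" using idx_lt[OF f' l] .
  have "(f'*L + l) div L = f'" "(f'*L + l) mod L = l" using l by simp_all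
  thus ?thesis unfolding tauhat_x_def using r by simp
qed

lemma yv_entry:
  assumes f2: "f2 < FF" and m: "m < L"
  shows "(kron Minv Si *\<^sub>v Tx z) $ (f2*L + m) = (hh * 2^K / 4) * (\<Sum>l<L. Si $$ (m,l) * (\<Sum>p<2^K. nq p * dd p f2 * xhat n nq x z p l))"
proof -
  have r: "f2*L + m < FF * L" using idx_lt[OF f2 m] .
  have rd: "(f2*L + m) div L = f2" "(f2*L + m) mod L = m" using m by simp_all
  have "(kron Minv Si *\<^sub>v Tx z) $ (f2*L + m) = (\<Sum>t<FF*L. kron Minv Si $$ (f2*L+m, t) * Tx z $ t)"
    using r by (subst mulv_entry) simp_all
  also have "\<dots> = (\<Sum>f'<FF. \<Sum>l<L. kron Minv Si $$ (f2*L+m, f'*L+l) * Tx z $ (f'*L+l))"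
    by (rule sum_reindex_prod)
  also have "\<dots> = (\<Sum>f'<FF. \<Sum>l<L. \<Sum>p<2^K. hh * Si $$ (m,l) * xhat n nq x z p l * (Minv $$ (f2,f') * g f' p))"
  proof (intro sum.cong refl)
    fix f' l assume f': "f' \<in> {..<FF}" and l: "l \<in> {..<L}"
    have t: "f'*L + l < FF * L" using idx_lt f' l by simp
    have td: "(f'*L + l) div L = f'" "(f'*L + l) mod L = l" using l by simp_all
    have k: "kron Minv Si $$ (f2*L+m, f'*L+l) = Minv $$ (f2,f') * Si $$ (m,l)"
      using r t rd td by (simp add: kron_entry)
    have f'': "f' < FF" and l': "l < L" using f' l by auto
    show "kron Minv Si $$ (f2*L+m, f'*L+l) * Tx z $ (f'*L+l) = (\<Sum>p<2^K. hh * Si $$ (m,l) * xhat n nq x z p l * (Minv $$ (f2,f') * g f' p))"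
      unfolding k Tx_entry2[OF f'' l'] by (simp add: sum_distrib_left algebra_simps)
  qed
  also have "\<dots> = (\<Sum>l<L. \<Sum>p<2^K. \<Sum>f'<FF. hh * Si $$ (m,l) * xhat n nq x z p l * (Minv $$ (f2,f') * g f' p))"
    by (rule sum3_swap)
  also have "\<dots> = (\<Sum>l<L. \<Sum>p<2^K. hh * Si $$ (m,l) * xhat n nq x z p l * ((2^K / 4) * nq p * dd p f2))"
  proof (intro sum.cong refl)
    fix l p assume "p \<in> {..<(2::nat)^K}"
    hence p: "p < 2^K" by simp
    show "(\<Sum>f'<FF. hh * Si $$ (m,l) * xhat n nq x z p l * (Minv $$ (f2,f') * g f' p)) = hh * Si $$ (m,l) * xhat n nq x z p l * ((2^K / 4) * nq p * dd p f2)"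
      unfolding sum_distrib_left[symmetric] MG[OF f2 p] ..
  qed
  also have "\<dots> = (hh * 2^K / 4) * (\<Sum>l<L. Si $$ (m,l) * (\<Sum>p<2^K. nq p * dd p f2 * xhat n nq x z p l))"
    by (simp add: sum_distrib_left algebra_simps)
  finally show ?thesis .
qed

lemma Gy:
  assumes z: "z \<in> Om" and q: "q < 2^K" and m: "m < L"
  shows "(\<Sum>f2<FF. g f2 q * (kron Minv Si *\<^sub>v Tx z) $ (f2*L + m))
       = (hh * 2^K * 2^K / 4) * nq q * (\<Sum>l<L. Si $$ (m,l) * (xhat n nq x z q l - xbar l))"
proof -
  have "(\<Sum>f2<FF. g f2 q * (kron Minv Si *\<^sub>v Tx z) $ (f2*L + m))
      = (\<Sum>f2<FF. \<Sum>l<L. \<Sum>p<2^K. (hh * 2^K / 4) * (Si $$ (m,l) * nq p * xhat n nq x z p l) * (dd p f2 * g f2 q))"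
  proof (rule sum.cong[OF refl])
    fix f2 assume "f2 \<in> {..<FF}"
    hence f2: "f2 < FF" by simp
    show "g f2 q * (kron Minv Si *\<^sub>v Tx z) $ (f2*L + m) = (\<Sum>l<L. \<Sum>p<2^K. (hh * 2^K / 4) * (Si $$ (m,l) * nq p * xhat n nq x z p l) * (dd p f2 * g f2 q))"
      unfolding yv_entry[OF f2 m] by (simp add: sum_distrib_left algebra_simps)
  qed
  also have "\<dots> = (\<Sum>l<L. \<Sum>p<2^K. \<Sum>f2<FF. (hh * 2^K / 4) * (Si $$ (m,l) * nq p * xhat n nq x z p l) * (dd p f2 * g f2 q))"
    by (rule sum3_swap)
  also have "\<dots> = (\<Sum>l<L. \<Sum>p<2^K. (hh * 2^K / 4) * (Si $$ (m,l) * 2^K) * ((if p = q then nq p * xhat n nq x z p l else 0) - pp q * (nq p * xhat n nq x z p l)))"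
  proof (intro sum.cong refl)
    fix l p assume "l \<in> {..<L}" "p \<in> {..<(2::nat)^K}"
    hence p: "p < 2^K" by simp
    show "(\<Sum>f2<FF. (hh * 2^K / 4) * (Si $$ (m,l) * nq p * xhat n nq x z p l) * (dd p f2 * g f2 q))
       = (hh * 2^K / 4) * (Si $$ (m,l) * 2^K) * ((if p = q then nq p * xhat n nq x z p l else 0) - pp q * (nq p * xhat n nq x z p l))"
      unfolding sum_distrib_left[symmetric] DG[OF p q] by (cases "p = q") (simp_all add: algebra_simps)
  qed
  also have "\<dots> = (\<Sum>l<L. (hh * 2^K / 4) * (Si $$ (m,l) * 2^K) * (nq q * xhat n nq x z q l - pp q * (\<Sum>p<2^K. nq p * xhat n nq x z p l)))"
    by (intro sum.cong refl) (rule sum_if_minus[OF q])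
  also have "\<dots> = (\<Sum>l<L. (hh * 2^K * 2^K / 4) * nq q * (Si $$ (m,l) * (xhat n nq x z q l - xbar l)))"
  proof (intro sum.cong refl)
    fix l
    have "pp q * (\<Sum>p<2^K. nq p * xhat n nq x z p l) = nq q * xbar l"
      unfolding sum_nq_xhat[OF z] pp_def using n_ge by simp
    thus "(hh * 2^K / 4) * (Si $$ (m,l) * 2^K) * (nq q * xhat n nq x z q l - pp q * (\<Sum>p<2^K. nq p * xhat n nq x z p l))
       = (hh * 2^K * 2^K / 4) * nq q * (Si $$ (m,l) * (xhat n nq x z q l - xbar l))"
      by (simp add: field_simps)
  qed
  also have "\<dots> = (hh * 2^K * 2^K / 4) * nq q * (\<Sum>l<L. Si $$ (m,l) * (xhat n nq x z q l - xbar l))"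
    by (simp add: sum_distrib_left)
  finally show ?thesis .
qed

lemma Vtx_carrier: "VTX \<in> carrier_mat FF (FF*L)" unfolding Vtx_def by simp

lemma key_B:
  assumes z: "z \<in> Om" and f: "f < FF"
  shows "((VTX * mat_inv VXX) *\<^sub>v Tx z) $ f = tauhat K n eff iota nq (Ypar n L Y x) z $ f - tau K n eff iota (Ypar n L Y x) $ f"
proof -
  define yv where "yv = kron Minv Si *\<^sub>v Tx z"
  define xc where "xc q l = xhat n nq x z q l - xbar l" for q l
  define A where "A q m = c2 K * (1 / real (nq q)) * g f q * fcov n (\<lambda>i. Y i q) (\<lambda>i. x i m)" for q m
  have kc: "kron Minv Si \<in> carrier_mat (FF*L) (FF*L)"
    by (rule carrier_matI) (simp_all only: kron_dims Minv_dims Si_dims)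
  have "(VTX * mat_inv VXX) *\<^sub>v Tx z = VTX *\<^sub>v yv"
    unfolding Vxx_inv yv_def by (rule assoc_mult_mat_vec[OF Vtx_carrier kc]) (rule carrier_vecI, rule Tx_dim)
  moreover have dy: "dim_vec yv = FF*L" unfolding yv_def using kc by simp
  moreover have "(VTX *\<^sub>v yv) $ f = (\<Sum>r<dim_vec yv. VTX $$ (f,r) * yv $ r)"
    by (rule mulv_entry) (use Vtx_carrier f dy in auto)
  ultimately have "((VTX * mat_inv VXX) *\<^sub>v Tx z) $ f = (\<Sum>r<FF*L. VTX $$ (f,r) * yv $ r)"
    by simp
  also have "\<dots> = (\<Sum>f2<FF. \<Sum>m<L. VTX $$ (f,f2*L+m) * yv $ (f2*L+m))" by (rule sum_reindex_prod)
  also have "\<dots> = (\<Sum>f2<FF. \<Sum>m<L. \<Sum>q<2^K. A q m * (g f2 q * yv $ (f2*L+m)))"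
  proof (intro sum.cong refl)
    fix f2 m assume f2: "f2 \<in> {..<FF}" and m: "m \<in> {..<L}"
    have r: "f2*L + m < FF*L" using idx_lt f2 m by simp
    have rd: "(f2*L + m) div L = f2" "(f2*L + m) mod L = m" using m by simp_all
    show "VTX $$ (f,f2*L+m) * yv $ (f2*L+m) = (\<Sum>q<2^K. A q m * (g f2 q * yv $ (f2*L+m)))"
      unfolding Vtx_entry[OF f r] rd A_def by (simp add: sum_distrib_left sum_distrib_right algebra_simps)
  qed
  also have "\<dots> = (\<Sum>m<L. \<Sum>q<2^K. \<Sum>f2<FF. A q m * (g f2 q * yv $ (f2*L+m)))" by (rule sum3_swap)
  also have "\<dots> = (\<Sum>m<L. \<Sum>q<2^K. A q m * ((hh * 2^K * 2^K / 4) * nq q * (\<Sum>l<L. Si $$ (m,l) * xc q l)))"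
  proof (intro sum.cong refl)
    fix m q assume m: "m \<in> {..<L}" and q: "q \<in> {..<(2::nat)^K}"
    have m': "m < L" and q': "q < 2^K" using m q by auto
    show "(\<Sum>f2<FF. A q m * (g f2 q * yv $ (f2*L+m))) = A q m * ((hh * 2^K * 2^K / 4) * nq q * (\<Sum>l<L. Si $$ (m,l) * xc q l))"
      unfolding sum_distrib_left[symmetric] yv_def Gy[OF z q' m'] xc_def ..
  qed
  also have "\<dots> = (\<Sum>m<L. \<Sum>q<2^K. (c2 K * 2^K * 2^K / 4) * (hh * (g f q * (fcov n (\<lambda>i. Y i q) (\<lambda>i. x i m) * (\<Sum>l<L. Si $$ (m,l) * xc q l)))))"
  proof (intro sum.cong refl)
    fix m q assume q: "q \<in> {..<(2::nat)^K}"
    hence nq0: "real (nq q) \<noteq> 0" using nq_ne0 by simp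
    show "A q m * ((hh * 2^K * 2^K / 4) * nq q * (\<Sum>l<L. Si $$ (m,l) * xc q l)) = (c2 K * 2^K * 2^K / 4) * (hh * (g f q * (fcov n (\<lambda>i. Y i q) (\<lambda>i. x i m) * (\<Sum>l<L. Si $$ (m,l) * xc q l))))"
      unfolding A_def using nq0 by (simp add: field_simps)
  qed
  also have "\<dots> = (\<Sum>m<L. \<Sum>q<2^K. hh * (g f q * (fcov n (\<lambda>i. Y i q) (\<lambda>i. x i m) * (\<Sum>l<L. Si $$ (m,l) * xc q l))))"
    unfolding cQ by simp
  also have "\<dots> = (\<Sum>q<2^K. \<Sum>m<L. hh * (g f q * (fcov n (\<lambda>i. Y i q) (\<lambda>i. x i m) * (\<Sum>l<L. Si $$ (m,l) * xc q l))))"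
    by (rule sum.swap)
  also have "\<dots> = hh * (\<Sum>q<2^K. g f q * (\<Sum>l<L. bq q l * xc q l))"
  proof -
    have "(\<Sum>m<L. hh * (g f q * (fcov n (\<lambda>i. Y i q) (\<lambda>i. x i m) * (\<Sum>l<L. Si $$ (m,l) * xc q l))))
       = hh * (g f q * (\<Sum>l<L. bq q l * xc q l))" for q
    proof -
      have "(\<Sum>m<L. fcov n (\<lambda>i. Y i q) (\<lambda>i. x i m) * (\<Sum>l<L. Si $$ (m,l) * xc q l))
          = (\<Sum>m<L. \<Sum>l<L. fcov n (\<lambda>i. Y i q) (\<lambda>i. x i m) * Si $$ (m,l) * xc q l)"
        by (simp add: sum_distrib_left mult.assoc)
      also have "\<dots> = (\<Sum>l<L. \<Sum>m<L. fcov n (\<lambda>i. Y i q) (\<lambda>i. x i m) * Si $$ (m,l) * xc q l)" by (rule sum.swap)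
      also have "\<dots> = (\<Sum>l<L. bq q l * xc q l)"
        unfolding bq_def by (intro sum.cong refl) (simp add: sum_distrib_right Sqx_entry)
      finally have e: "(\<Sum>m<L. fcov n (\<lambda>i. Y i q) (\<lambda>i. x i m) * (\<Sum>l<L. Si $$ (m,l) * xc q l)) = (\<Sum>l<L. bq q l * xc q l)" .
      have "(\<Sum>m<L. hh * (g f q * (fcov n (\<lambda>i. Y i q) (\<lambda>i. x i m) * (\<Sum>l<L. Si $$ (m,l) * xc q l))))
        = hh * (g f q * (\<Sum>m<L. fcov n (\<lambda>i. Y i q) (\<lambda>i. x i m) * (\<Sum>l<L. Si $$ (m,l) * xc q l)))"
        by (simp only: sum_distrib_left)
      thus ?thesis unfolding e .
    qed
    thus ?thesis by (simp add: sum_distrib_left)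
  qed
  also have "\<dots> = tauhat K n eff iota nq (Ypar n L Y x) z $ f - tau K n eff iota (Ypar n L Y x) $ f"
    unfolding key_par[OF z f] xc_def ..
  finally show ?thesis .
qed

end


lemma fcov_diff_right: "fcov n f (\<lambda>i. g1 i - g2 i) = fcov n f g1 - fcov n f g2"
proof -
  have "fcov n (\<lambda>i. g1 i + (-1) * g2 i) f = fcov n g1 f + fcov n (\<lambda>i. (-1) * g2 i) f" by (rule fcov_add_left)
  also have "fcov n (\<lambda>i. (-1) * g2 i) f = - fcov n g2 f" using fcov_scale_left[of n "-1" g2 f] by simp
  finally show ?thesis by (simp add: fcov_comm)
qed

context crfe2 begin

lemma fcov_Ypar_left: "fcov n (\<lambda>i. Ypar n L Y x i q) Z = (\<Sum>l<L. bq q l * fcov n (\<lambda>i. x i l) Z)"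
proof -
  have "fcov n (\<lambda>i. Ypar n L Y x i q) Z = fcov n (\<lambda>i. fmean n (\<lambda>j. Y j q) + (\<Sum>l<L. bq q l * (x i l - xbar l))) Z"
    unfolding Ypar_lin ..
  also have "\<dots> = fcov n (\<lambda>i. fmean n (\<lambda>j. Y j q)) Z + fcov n (\<lambda>i. \<Sum>l<L. bq q l * (x i l - xbar l)) Z"
    by (rule fcov_add_left)
  also have "fcov n (\<lambda>i. fmean n (\<lambda>j. Y j q)) Z = 0" by (rule fcov_const_left)
  also have "fcov n (\<lambda>i. \<Sum>l<L. bq q l * (x i l - xbar l)) Z = (\<Sum>l<L. fcov n (\<lambda>i. bq q l * (x i l - xbar l)) Z)"
    by (rule fcov_sum_left) simp
  also have "\<dots> = (\<Sum>l<L. bq q l * fcov n (\<lambda>i. x i l) Z)"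
  proof (rule sum.cong[OF refl])
    fix l
    have "fcov n (\<lambda>i. x i l + (- xbar l)) Z = fcov n (\<lambda>i. x i l) Z + fcov n (\<lambda>i. - xbar l) Z" by (rule fcov_add_left)
    hence "fcov n (\<lambda>i. x i l - xbar l) Z = fcov n (\<lambda>i. x i l) Z" by (simp add: fcov_const_left)
    thus "fcov n (\<lambda>i. bq q l * (x i l - xbar l)) Z = bq q l * fcov n (\<lambda>i. x i l) Z" by (simp add: fcov_scale_left)
  qed
  finally show ?thesis by simp
qed

lemma Sx_entry: "m < L \<Longrightarrow> l < L \<Longrightarrow> Sx $$ (m,l) = fcov n (\<lambda>i. x i m) (\<lambda>i. x i l)"
  unfolding Sxx_def by simp

lemma bq_Sx: assumes l: "l < L" shows "(\<Sum>m<L. bq q m * Sx $$ (m,l)) = fcov n (\<lambda>i. Y i q) (\<lambda>i. x i l)"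
proof -
  have "(\<Sum>m<L. bq q m * Sx $$ (m,l)) = (\<Sum>m<L. \<Sum>k<L. Sqx n L Y x q $$ (0,k) * (Si $$ (k,m) * Sx $$ (m,l)))"
    unfolding bq_def by (simp add: sum_distrib_right mult.assoc)
  also have "\<dots> = (\<Sum>k<L. Sqx n L Y x q $$ (0,k) * (\<Sum>m<L. Si $$ (k,m) * Sx $$ (m,l)))"
    by (subst sum.swap) (simp add: sum_distrib_left)
  also have "\<dots> = (\<Sum>k<L. Sqx n L Y x q $$ (0,k) * (if k = l then 1 else 0))"
  proof (rule sum.cong[OF refl])
    fix k assume "k \<in> {..<L}"
    hence k: "k < L" by simp
    have "(\<Sum>m<L. Si $$ (k,m) * Sx $$ (m,l)) = (Si * Sx) $$ (k,l)"
      using k l Sx_carrier by (subst mult_entry) auto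
    also have "\<dots> = (if k = l then 1 else 0)" unfolding Si_props(3) using k l by simp
    finally show "Sqx n L Y x q $$ (0,k) * (\<Sum>m<L. Si $$ (k,m) * Sx $$ (m,l)) = Sqx n L Y x q $$ (0,k) * (if k = l then 1 else 0)" by simp
  qed
  also have "\<dots> = Sqx n L Y x q $$ (0,l)"
  proof -
    have "(\<Sum>k<L. Sqx n L Y x q $$ (0,k) * (if k = l then 1 else 0)) = (\<Sum>k<L. Sqx n L Y x q $$ (0,k) * (if l = k then 1 else 0))"
      by (intro sum.cong) auto
    thus ?thesis using sum_ind[OF l, of "\<lambda>k. Sqx n L Y x q $$ (0,k)"] by simp
  qed
  also have "\<dots> = fcov n (\<lambda>i. Y i q) (\<lambda>i. x i l)" using Sqx_entry[OF l] .
  finally show ?thesis .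
qed

lemma x_Yperp: assumes l: "l < L" shows "fcov n (\<lambda>i. x i l) (\<lambda>i. Yperp n L Y x i q) = 0"
proof -
  have "fcov n (\<lambda>i. x i l) (\<lambda>i. Yperp n L Y x i q) = fcov n (\<lambda>i. x i l) (\<lambda>i. Y i q) - fcov n (\<lambda>i. x i l) (\<lambda>i. Ypar n L Y x i q)"
    unfolding Yperp_def by (rule fcov_diff_right)
  also have "fcov n (\<lambda>i. x i l) (\<lambda>i. Ypar n L Y x i q) = (\<Sum>m<L. bq q m * fcov n (\<lambda>i. x i m) (\<lambda>i. x i l))"
    by (subst fcov_comm) (rule fcov_Ypar_left)
  also have "\<dots> = (\<Sum>m<L. bq q m * Sx $$ (m,l))" using l by (intro sum.cong refl) (simp add: Sx_entry)
  also have "\<dots> = fcov n (\<lambda>i. Y i q) (\<lambda>i. x i l)" by (rule bq_Sx[OF l])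
  finally show ?thesis by (simp add: fcov_comm)
qed

lemma Ypar_Yperp: "fcov n (\<lambda>i. Ypar n L Y x i q) (\<lambda>i. Yperp n L Y x i q') = 0"
  unfolding fcov_Ypar_left by (rule sum.neutral) (simp add: x_Yperp)

lemma tau_ind_orth: assumes f1: "f1 < FF" and f2: "f2 < FF"
  shows "fcov n (\<lambda>i. tau_ind K eff iota (Ypar n L Y x) i $ f1) (\<lambda>i. tau_ind K eff iota (Yperp n L Y x) i $ f2) = 0"
proof -
  have "fcov n (\<lambda>i. tau_ind K eff iota (Ypar n L Y x) i $ f1) (\<lambda>i. tau_ind K eff iota (Yperp n L Y x) i $ f2)
     = fcov n (\<lambda>i. \<Sum>q<2^K. hh * g f1 q * Ypar n L Y x i q) (\<lambda>i. \<Sum>q<2^K. hh * g f2 q * Yperp n L Y x i q)"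
    unfolding tau_ind_idx[OF f1] tau_ind_idx[OF f2] ..
  also have "\<dots> = (\<Sum>q<2^K. \<Sum>q'<2^K. fcov n (\<lambda>i. hh * g f1 q * Ypar n L Y x i q) (\<lambda>i. hh * g f2 q' * Yperp n L Y x i q'))"
    by (simp only: fcov_sum_left[OF finite_lessThan] fcov_sum_right[OF finite_lessThan])
  also have "\<dots> = 0"
    by (simp only: fcov_scale_left fcov_scale_right Ypar_Yperp mult_zero_right sum.neutral_const)
  finally show ?thesis .
qed

lemma tauhat_diff: "f < FF \<Longrightarrow> tauhat K n eff iota nq (Yperp n L Y x) z $ f
   = tauhat K n eff iota nq Y z $ f - tauhat K n eff iota nq (Ypar n L Y x) z $ f"
  unfolding tauhat_def Yhat_def Yperp_def
  by (simp add: sum_subtractf diff_divide_distrib right_diff_distrib)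

lemma tau_diff: "f < FF \<Longrightarrow> tau K n eff iota (Yperp n L Y x) $ f
   = tau K n eff iota Y $ f - tau K n eff iota (Ypar n L Y x) $ f"
  unfolding tau_def Yperp_def fmean_def
  by (simp add: sum_subtractf diff_divide_distrib right_diff_distrib)

end


context crfe2 begin

abbreviation "BB \<equiv> VTX * mat_inv VXX"

lemma Vtt_entry: assumes f: "f < FF" and f': "f' < FF"
  shows "Vtt K n eff iota nq W $$ (f,f') = c2 K * (\<Sum>q<2^K. (1 / real (nq q)) * (g f q * g f' q * fcov n (\<lambda>i. W i q) (\<lambda>i. W i q)))
     - (1 / real n) * fcov n (\<lambda>i. tau_ind K eff iota W i $ f) (\<lambda>i. tau_ind K eff iota W i $ f')"
  unfolding Vtt_def Stt_def using f f' by (simp add: outer_entry mult.assoc)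

lemma Covm_entry: "j < d1 \<Longrightarrow> k < d2 \<Longrightarrow> Covm d1 d2 Om X V $$ (j,k) = Ex Om (\<lambda>z. (X z $ j - Ex Om (\<lambda>w. X w $ j)) * (V z $ k - Ex Om (\<lambda>w. V w $ k)))"
  unfolding Covm_def by simp

lemma BB_dim: "dim_row BB = FF" unfolding Vtx_def by simp

lemma BTx_idx: "z \<in> Om \<Longrightarrow> f < FF \<Longrightarrow> (BB *\<^sub>v Tx z) $ f = tauhat K n eff iota nq (Ypar n L Y x) z $ f + - (tau K n eff iota (Ypar n L Y x) $ f)"
  using key_B by simp

lemma R_idx: "z \<in> Om \<Longrightarrow> f < FF \<Longrightarrow> (Th z - BB *\<^sub>v Tx z) $ f = tauhat K n eff iota nq (Yperp n L Y x) z $ f + - (tau K n eff iota (Yperp n L Y x) $ f)"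
  using key_B[of z f] tauhat_diff[of f z] tau_diff[of f] BB_dim by simp

lemma main_locale:
  "(\<forall>z\<in>Om. lin_proj FF (FF * L) Om Th Tx z = BB *\<^sub>v Tx z)
    \<and> (\<forall>z\<in>Om. Th z - lin_proj FF (FF * L) Om Th Tx z = Th z - BB *\<^sub>v Tx z)
    \<and> Covm FF FF Om (\<lambda>z. BB *\<^sub>v Tx z) (\<lambda>z. BB *\<^sub>v Tx z) = Vtt K n eff iota nq (Ypar n L Y x)
    \<and> Covm FF FF Om (\<lambda>z. Th z - BB *\<^sub>v Tx z) (\<lambda>z. Th z - BB *\<^sub>v Tx z) = Vtt K n eff iota nq (Yperp n L Y x)
    \<and> Covm FF FF Om (\<lambda>z. BB *\<^sub>v Tx z) (\<lambda>z. Th z - BB *\<^sub>v Tx z) = 0\<^sub>m FF FF"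
proof (intro conjI)
  show "\<forall>z\<in>Om. lin_proj FF (FF * L) Om Th Tx z = BB *\<^sub>v Tx z" using linproj_eq by simp
  thus "\<forall>z\<in>Om. Th z - lin_proj FF (FF * L) Om Th Tx z = Th z - BB *\<^sub>v Tx z" by simp
  show "Covm FF FF Om (\<lambda>z. BB *\<^sub>v Tx z) (\<lambda>z. BB *\<^sub>v Tx z) = Vtt K n eff iota nq (Ypar n L Y x)"
  proof (rule eq_matI)
    fix f f' assume "f < dim_row (Vtt K n eff iota nq (Ypar n L Y x))" "f' < dim_col (Vtt K n eff iota nq (Ypar n L Y x))"
    hence f: "f < FF" and f': "f' < FF" unfolding Vtt_def by simp_all
    show "Covm FF FF Om (\<lambda>z. BB *\<^sub>v Tx z) (\<lambda>z. BB *\<^sub>v Tx z) $$ (f, f') = Vtt K n eff iota nq (Ypar n L Y x) $$ (f, f')"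
      unfolding Covm_entry[OF f f'] Vtt_entry[OF f f']
      by (rule cov_gen[OF f f']) (simp_all only: BTx_idx f f')
  qed (simp_all add: Covm_def Vtt_def)
  show "Covm FF FF Om (\<lambda>z. Th z - BB *\<^sub>v Tx z) (\<lambda>z. Th z - BB *\<^sub>v Tx z) = Vtt K n eff iota nq (Yperp n L Y x)"
  proof (rule eq_matI)
    fix f f' assume "f < dim_row (Vtt K n eff iota nq (Yperp n L Y x))" "f' < dim_col (Vtt K n eff iota nq (Yperp n L Y x))"
    hence f: "f < FF" and f': "f' < FF" unfolding Vtt_def by simp_all
    show "Covm FF FF Om (\<lambda>z. Th z - BB *\<^sub>v Tx z) (\<lambda>z. Th z - BB *\<^sub>v Tx z) $$ (f, f') = Vtt K n eff iota nq (Yperp n L Y x) $$ (f, f')"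
      unfolding Covm_entry[OF f f'] Vtt_entry[OF f f']
      by (rule cov_gen[OF f f']) (simp_all only: R_idx f f')
  qed (simp_all add: Covm_def Vtt_def)
  show "Covm FF FF Om (\<lambda>z. BB *\<^sub>v Tx z) (\<lambda>z. Th z - BB *\<^sub>v Tx z) = 0\<^sub>m FF FF"
  proof (rule eq_matI)
    fix f f' assume "f < dim_row (0\<^sub>m FF FF :: real mat)" "f' < dim_col (0\<^sub>m FF FF :: real mat)"
    hence f: "f < FF" and f': "f' < FF" by simp_all
    have "Covm FF FF Om (\<lambda>z. BB *\<^sub>v Tx z) (\<lambda>z. Th z - BB *\<^sub>v Tx z) $$ (f, f')
       = c2 K * (\<Sum>q<2^K. (1 / real (nq q)) * (g f q * g f' q * fcov n (\<lambda>i. Ypar n L Y x i q) (\<lambda>i. Yperp n L Y x i q)))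
         - (1 / real n) * fcov n (\<lambda>i. tau_ind K eff iota (Ypar n L Y x) i $ f) (\<lambda>i. tau_ind K eff iota (Yperp n L Y x) i $ f')"
      unfolding Covm_entry[OF f f']
      by (rule cov_gen[OF f f']) (simp_all only: BTx_idx R_idx f f')
    also have "\<dots> = 0" by (simp add: Ypar_Yperp tau_ind_orth[OF f f'])
    finally show "Covm FF FF Om (\<lambda>z. BB *\<^sub>v Tx z) (\<lambda>z. Th z - BB *\<^sub>v Tx z) $$ (f, f') = (0\<^sub>m FF FF :: real mat) $$ (f, f')"
      using f f' by simp
  qed (simp_all add: Covm_def)
qed

end


theorem theorem1:
  fixes K n L :: nat
    and iota :: "nat \<Rightarrow> nat \<Rightarrow> int"
    and eff :: "nat \<Rightarrow> nat set"
    and nq :: "nat \<Rightarrow> nat"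
    and Y x :: "nat \<Rightarrow> nat \<Rightarrow> real"
  assumes K: "K \<ge> 1"
    and iota: "bij_betw (\<lambda>q. \<lambda>k\<in>{1..K}. iota q k) {..<2^K} ({1..K} \<rightarrow>\<^sub>E {-1, 1})"
    and eff: "bij_betw eff {..<2^K - 1} {A. A \<subseteq> {1..K} \<and> A \<noteq> {}}"
    and nq_pos: "\<And>q. q < 2^K \<Longrightarrow> nq q \<ge> 1"
    and nq_sum: "(\<Sum>q<2^K. nq q) = n"
    and Sxx_nonsing: "invertible_mat (Sxx n L x)"
  defines "F \<equiv> 2^K - 1"
    and "Om \<equiv> assignments n (2^K) nq"
    and "B \<equiv> Vtx K n L eff iota nq Y x * mat_inv (Vxx K n L eff iota nq x)"
    and "Th \<equiv> (\<lambda>z. tauhat K n eff iota nq Y z - tau K n eff iota Y)"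
    and "Tx \<equiv> tauhat_x K n L eff iota nq x"
  shows "(\<forall>z\<in>Om. lin_proj F (F * L) Om Th Tx z = B *\<^sub>v Tx z)
    \<and> (\<forall>z\<in>Om. Th z - lin_proj F (F * L) Om Th Tx z = Th z - B *\<^sub>v Tx z)
    \<and> Covm F F Om (\<lambda>z. B *\<^sub>v Tx z) (\<lambda>z. B *\<^sub>v Tx z) = Vtt K n eff iota nq (Ypar n L Y x)
    \<and> Covm F F Om (\<lambda>z. Th z - B *\<^sub>v Tx z) (\<lambda>z. Th z - B *\<^sub>v Tx z) = Vtt K n eff iota nq (Yperp n L Y x)
    \<and> Covm F F Om (\<lambda>z. B *\<^sub>v Tx z) (\<lambda>z. Th z - B *\<^sub>v Tx z) = 0\<^sub>m F F"
proof -
  interpret C: crfe2 K n iota eff nq L Y x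
    using K iota eff nq_pos nq_sum Sxx_nonsing by unfold_locales auto
  show ?thesis using C.main_locale unfolding F_def Om_def B_def Th_def Tx_def by simp
qed

end
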